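(* There exist two model phylogenetic networks $N_3$ and $N_4$ on $S=\{1,\dots,13\}$, both of class I (no pair of distinct convergent nodes), such that $N_3\not\cong N_4$ but $\theta_{AB}(N_3)=\theta_{AB}(N_4)$.
   Context: A DAG $N=(V,E)$ is labeled in a finite set $S$ if its leaves (nodes of out-degree 0) are bijectively labeled by $S$; leaves are identified with their labels. Isomorphism ($\cong$) of labeled DAGs means isomorphism of directed graphs preserving leaf labels. A path $u\rightsquigarrow v$ is a sequence of nodes $u=v_0,\dots,v_k=v$ with $(v_{i-1},v_i)\in E$. A model phylogenetic network on $S$ is a rooted DAG labeled in $S$ whose nodes are classified as tree nodes or hybrid nodes, such that: the root and every internal tree node have out-degree 2; every hybrid node has out-degree 1 and in-degree 2 (allo-polyploid) or in-degree 1 (auto-polyploid), and every node of in-degree 2 is hybrid while all other nodes with in-degree $\neq 1$ are tree nodes; the child of a hybrid node is always a tree node; and strong time consistency holds: an arc is a tree arc if its head is a tree node and a network arc if its head is hybrid; if $x,y$ are nodes for which there exists a sequence $(v_0,\dots,v_k)$ with $v_0=x$, $v_k=y$ such that for every $i$ either $(v_i,v_{i+1})$ is an arc of $N$ or $(v_{i+1},v_i)$ is a network arc of $N$, and at least one pair $(v_i,v_{i+1})$ is a tree arc of $N$, then $x$ and $y$ do not have a hybrid child in common. For a node $u$: $C(u)$ is the set of leaves descending from $u$; $A(u)$ the set of leaves $s$ such that every path from the root to $s$ contains $u$; $B(u)=C(u)\setminus A(u)$. For an arc $e=(u,v)$, $\theta_{AB}(e)=(A(v),B(v),S\setminus C(v))$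 where each leaf $s\in A(v)\cup B(v)$ is weighted by the maximum number of hybrid nodes in a path from $v$ to $s$ (including $v$ and $s$); $\theta_{AB}(N)=\{\theta_{AB}(e)\mid e\in E\}$. Two nodes $u,v$ are convergent if for every leaf $s$ and every $k\ge 0$, there is a path $u\rightsquigarrow s$ containing exactly $k$ hybrid nodes if and only if there is a path $v\rightsquigarrow s$ containing exactly $k$ hybrid nodes. The network is of class I if it contains no pair of (distinct) convergent nodes. *)

theory Defs
  imports Main
begin

record 'v net =
  nodes :: "'v set"
  arcs  :: "('v \<times> 'v) set"
  hyb   :: "'v set"
  lbl   :: "'v \<Rightarrow> nat"

definition indeg :: "('v, 'b) net_scheme \<Rightarrow> 'v \<Rightarrow> nat" where
  "indeg N v = card {u \<in> nodes N. (u, v) \<in> arcs N}"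

definition outdeg :: "('v, 'b) net_scheme \<Rightarrow> 'v \<Rightarrow> nat" where
  "outdeg N v = card {w \<in> nodes N. (v, w) \<in> arcs N}"

definition leaves :: "('v, 'b) net_scheme \<Rightarrow> 'v set" where
  "leaves N = {v \<in> nodes N. outdeg N v = 0}"

definition labeled_dag :: "('v, 'b) net_scheme \<Rightarrow> nat set \<Rightarrow> bool" where
  "labeled_dag N S \<longleftrightarrow> finite (nodes N) \<and> arcs N \<subseteq> nodes N \<times> nodes N
     \<and> (\<forall>v. (v, v) \<notin> (arcs N)\<^sup>+) \<and> bij_betw (lbl N) (leaves N) S"

definition rooted :: "('v, 'b) net_scheme \<Rightarrow> bool" where
  "rooted N \<longleftrightarrow> (\<exists>!r. r \<in> nodes N \<and> indeg N r = 0)"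

definition root :: "('v, 'b) net_scheme \<Rightarrow> 'v" where
  "root N = (THE r. r \<in> nodes N \<and> indeg N r = 0)"

definition is_path :: "('v, 'b) net_scheme \<Rightarrow> 'v \<Rightarrow> 'v \<Rightarrow> 'v list \<Rightarrow> bool" where
  "is_path N u v p \<longleftrightarrow> p \<noteq> [] \<and> hd p = u \<and> last p = v \<and> set p \<subseteq> nodes N
     \<and> (\<forall>i. Suc i < length p \<longrightarrow> (p ! i, p ! Suc i) \<in> arcs N)"

definition hcount :: "('v, 'b) net_scheme \<Rightarrow> 'v list \<Rightarrow> nat" where
  "hcount N p = length (filter (\<lambda>x. x \<in> hyb N) p)"

definition tree_arcs :: "('v, 'b) net_scheme \<Rightarrow> ('v \<times> 'v) set" where
  "tree_arcs N = {(a, b) \<in> arcs N. b \<notin> hyb N}"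

definition network_arcs :: "('v, 'b) net_scheme \<Rightarrow> ('v \<times> 'v) set" where
  "network_arcs N = {(a, b) \<in> arcs N. b \<in> hyb N}"

definition tc_step :: "('v, 'b) net_scheme \<Rightarrow> ('v \<times> 'v) set" where
  "tc_step N = arcs N \<union> (network_arcs N)\<inverse>"

definition strong_time_consistent :: "('v, 'b) net_scheme \<Rightarrow> bool" where
  "strong_time_consistent N \<longleftrightarrow>
     (\<forall>x y. (x, y) \<in> (tc_step N)\<^sup>* O tree_arcs N O (tc_step N)\<^sup>* \<longrightarrow>
        \<not> (\<exists>h \<in> hyb N. (x, h) \<in> arcs N \<and> (y, h) \<in> arcs N))"

definition model_network :: "('v, 'b) net_scheme \<Rightarrow> nat set \<Rightarrow> bool" where
  "model_network N S \<longleftrightarrow>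
     labeled_dag N S \<and> rooted N \<and> hyb N \<subseteq> nodes N
     \<and> outdeg N (root N) = 2
     \<and> (\<forall>v \<in> nodes N - hyb N. v \<notin> leaves N \<longrightarrow> outdeg N v = 2)
     \<and> (\<forall>v \<in> hyb N. outdeg N v = 1 \<and> (indeg N v = 1 \<or> indeg N v = 2))
     \<and> (\<forall>v \<in> nodes N. indeg N v = 2 \<longrightarrow> v \<in> hyb N)
     \<and> (\<forall>v \<in> nodes N. indeg N v \<noteq> 1 \<and> indeg N v \<noteq> 2 \<longrightarrow> v \<notin> hyb N)
     \<and> (\<forall>h \<in> hyb N. \<forall>w. (h, w) \<in> arcs N \<longrightarrow> w \<notin> hyb N)
     \<and> strong_time_consistent N"

definition Cset :: "('v, 'b) net_scheme \<Rightarrow> 'v \<Rightarrow> 'v set" where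
  "Cset N u = {s \<in> leaves N. \<exists>p. is_path N u s p}"

definition Aset :: "('v, 'b) net_scheme \<Rightarrow> 'v \<Rightarrow> 'v set" where
  "Aset N u = {s \<in> leaves N. \<forall>p. is_path N (root N) s p \<longrightarrow> u \<in> set p}"

definition Bset :: "('v, 'b) net_scheme \<Rightarrow> 'v \<Rightarrow> 'v set" where
  "Bset N u = Cset N u - Aset N u"

definition hweight :: "('v, 'b) net_scheme \<Rightarrow> 'v \<Rightarrow> 'v \<Rightarrow> nat" where
  "hweight N v s = Max {hcount N p | p. is_path N v s p}"

definition theta_arc :: "('v, 'b) net_scheme \<Rightarrow> nat set \<Rightarrow> 'v \<times> 'v
     \<Rightarrow> (nat \<times> nat) set \<times> (nat \<times> nat) set \<times> nat set" where
  "theta_arc N S e = (let v = snd e in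
     ((\<lambda>s. (lbl N s, hweight N v s)) ` Aset N v,
      (\<lambda>s. (lbl N s, hweight N v s)) ` Bset N v,
      S - lbl N ` Cset N v))"

definition theta_AB :: "('v, 'b) net_scheme \<Rightarrow> nat set
     \<Rightarrow> ((nat \<times> nat) set \<times> (nat \<times> nat) set \<times> nat set) set" where
  "theta_AB N S = theta_arc N S ` arcs N"

definition convergent :: "('v, 'b) net_scheme \<Rightarrow> 'v \<Rightarrow> 'v \<Rightarrow> bool" where
  "convergent N u v \<longleftrightarrow> (\<forall>s \<in> leaves N. \<forall>k::nat.
     (\<exists>p. is_path N u s p \<and> hcount N p = k) \<longleftrightarrow> (\<exists>p. is_path N v s p \<and> hcount N p = k))"

definition class_I :: "('v, 'b) net_scheme \<Rightarrow> bool" where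
  "class_I N \<longleftrightarrow> (\<forall>u \<in> nodes N. \<forall>v \<in> nodes N. u \<noteq> v \<longrightarrow> \<not> convergent N u v)"

definition net_iso :: "('v, 'b) net_scheme \<Rightarrow> ('w, 'c) net_scheme \<Rightarrow> bool" where
  "net_iso N M \<longleftrightarrow> (\<exists>f. bij_betw f (nodes N) (nodes M)
     \<and> (\<forall>u \<in> nodes N. \<forall>v \<in> nodes N. (u, v) \<in> arcs N \<longleftrightarrow> (f u, f v) \<in> arcs M)
     \<and> (\<forall>s \<in> leaves N. lbl M (f s) = lbl N s))"

end

theory Submission
  imports Defs
begin

lemma is_path_alt: "is_path N u v p \<longleftrightarrow> p \<noteq> [] \<and> hd p = u \<and> last p = v \<and> set p \<subseteq> nodes N
   \<and> successively (\<lambda>x y. (x,y) \<in> arcs N) p"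
  by (simp add: is_path_def successively_conv_nth)

fun pths :: "('v\<times>'v) list \<Rightarrow> nat \<Rightarrow> 'v \<Rightarrow> 'v list list" where
  "pths es 0 u = [[u]]"
| "pths es (Suc n) u = [u] # concat (map (\<lambda>w. map ((#) u) (pths es n w)) (map snd (filter (\<lambda>e. fst e = u) es)))"

lemma pths_sound: "p \<in> set (pths es n u) \<Longrightarrow> p \<noteq> [] \<and> hd p = u \<and> successively (\<lambda>x y. (x,y) \<in> set es) p"
proof (induction n arbitrary: u p)
  case 0 then show ?case by simp
next
  case (Suc n)
  from Suc.prems have "p = [u] \<or> (\<exists>e q. e \<in> set es \<and> fst e = u \<and> q \<in> set (pths es n (snd e)) \<and> p = u # q)"
    by auto
  then show ?case
  proof
    assume "p = [u]" then show ?thesis by simp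
  next
    assume "\<exists>e q. e \<in> set es \<and> fst e = u \<and> q \<in> set (pths es n (snd e)) \<and> p = u # q"
    then obtain e q where eq: "e \<in> set es" "fst e = u" "q \<in> set (pths es n (snd e))" "p = u # q" by blast
    then have "q \<noteq> [] \<and> hd q = snd e \<and> successively (\<lambda>x y. (x,y) \<in> set es) q" using Suc.IH by blast
    then show ?thesis using eq by (cases e) (auto simp: successively_Cons)
  qed
qed

lemma pths_complete: "p \<noteq> [] \<Longrightarrow> successively (\<lambda>x y. (x,y) \<in> set es) p \<Longrightarrow> length p \<le> Suc n
   \<Longrightarrow> p \<in> set (pths es n (hd p))"
proof (induction n arbitrary: p)
  case 0 then show ?case by (cases p) auto
next
  case (Suc n)
  obtain x q where p: "p = x # q" using Suc.prems(1) by (cases p) auto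
  show ?case
  proof (cases "q = []")
    case True then show ?thesis using p by simp
  next
    case False
    have e: "(x, hd q) \<in> set es" and sq: "successively (\<lambda>x y. (x,y) \<in> set es) q"
      using Suc.prems False p by (auto simp: successively_Cons)
    have "q \<in> set (pths es n (hd q))" using Suc.IH[OF False sq] Suc.prems p by simp
    then show ?thesis using p e by force
  qed
qed

lemma succ_sorted:
  assumes "\<forall>(a,b)\<in>R. (a::nat) < b" "successively (\<lambda>x y. (x,y) \<in> R) p"
  shows "sorted_wrt (<) p"
proof -
  have "successively (<) p" using assms(2) by (rule successively_mono) (use assms(1) in auto)
  then show ?thesis by (subst successively_conv_sorted_wrt[symmetric]) auto
qed

lemma succ_set:
  assumes "R \<subseteq> A \<times> A" "successively (\<lambda>x y. (x,y) \<in> R) p" "p \<noteq> []" "hd p \<in> A"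
  shows "set p \<subseteq> A"
  using assms(2-4)
proof (induction p)
  case Nil then show ?case by simp
next
  case (Cons x q)
  show ?case
  proof (cases q)
    case Nil then show ?thesis using Cons by simp
  next
    case (Cons y r)
    then show ?thesis using Cons.prems Cons.IH assms(1) by (auto simp: successively_Cons)
  qed
qed

definition PS :: "nat list \<Rightarrow> (nat\<times>nat) list \<Rightarrow> nat \<Rightarrow> nat list list" where
  "PS ns es u = (if u \<in> set ns then pths es (length ns) u else [])"

definition good :: "nat list \<Rightarrow> (nat\<times>nat) list \<Rightarrow> bool" where
  "good ns es \<longleftrightarrow> (\<forall>(a,b)\<in>set es. a < b \<and> a \<in> set ns \<and> b \<in> set ns)"

lemma path_PS:
  assumes "nodes N = set ns" "arcs N = set es" "good ns es"
  shows "is_path N u v p \<longleftrightarrow> p \<in> set (PS ns es u) \<and> last p = v"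
proof
  assume "is_path N u v p"
  then have p: "p \<noteq> []" "hd p = u" "last p = v" "set p \<subseteq> set ns" "successively (\<lambda>x y. (x,y) \<in> set es) p"
    using assms by (auto simp: is_path_alt)
  have "sorted_wrt (<) p" using succ_sorted[OF _ p(5)] assms(3) by (auto simp: good_def)
  then have "distinct p" by (simp add: strict_sorted_iff)
  then have "length p = card (set p)" by (simp add: distinct_card)
  also have "\<dots> \<le> card (set ns)" using p(4) by (simp add: card_mono)
  also have "\<dots> \<le> length ns" by (rule card_length)
  finally have "length p \<le> Suc (length ns)" by simp
  then have "p \<in> set (pths es (length ns) u)" using pths_complete[OF p(1) p(5)] p(2) by simp
  moreover have "u \<in> set ns" using p by (cases p) auto
  ultimately show "p \<in> set (PS ns es u) \<and> last p = v" using p by (simp add: PS_def)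
next
  assume a: "p \<in> set (PS ns es u) \<and> last p = v"
  then have u: "u \<in> set ns" by (simp add: PS_def split: if_splits)
  then have p: "p \<noteq> []" "hd p = u" "successively (\<lambda>x y. (x,y) \<in> set es) p"
    using a pths_sound[of p es "length ns" u] by (auto simp: PS_def)
  have "set es \<subseteq> set ns \<times> set ns" using assms(3) by (auto simp: good_def)
  then have "set p \<subseteq> set ns" using succ_set[OF _ p(3) p(1)] p(2) u by simp
  then show "is_path N u v p" using p a assms by (simp add: is_path_alt)
qed

lemma outdeg_eq: "nodes N = set ns \<Longrightarrow> arcs N = set es \<Longrightarrow> outdeg N v = card (set (filter (\<lambda>w. (v,w) \<in> set es) ns))"
  by (simp add: outdeg_def)

lemma indeg_eq: "nodes N = set ns \<Longrightarrow> arcs N = set es \<Longrightarrow> indeg N v = card (set (filter (\<lambda>w. (w,v) \<in> set es) ns))"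
  by (simp add: indeg_def)

lemma leaves_eq: "leaves N = Set.filter (\<lambda>v. outdeg N v = 0) (nodes N)"
  by (auto simp: leaves_def Set.filter_eq)

context
  fixes N :: "(nat, 'b) net_scheme" and ns es
  assumes nN: "nodes N = set ns" and aN: "arcs N = set es" and gd: "good ns es"
begin

lemma Cset_eq: "Cset N u = Set.filter (\<lambda>s. \<exists>p\<in>set (PS ns es u). last p = s) (leaves N)"
  using path_PS[OF nN aN gd] by (auto simp: Cset_def Set.filter_eq)

lemma Aset_eq: "Aset N u = Set.filter (\<lambda>s. \<forall>p\<in>set (PS ns es (root N)). last p = s \<longrightarrow> u \<in> set p) (leaves N)"
  using path_PS[OF nN aN gd] by (auto simp: Aset_def Set.filter_eq)

lemma hc_set: "{hcount N p |p. is_path N v s p} = set (map (hcount N) (filter (\<lambda>p. last p = s) (PS ns es v)))"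
  using path_PS[OF nN aN gd] by auto

lemma hweight_eq: "hweight N v s = Max (set (map (hcount N) (filter (\<lambda>p. last p = s) (PS ns es v))))"
  unfolding hweight_def hc_set ..

lemma convergent_eq: "convergent N u v \<longleftrightarrow> (\<forall>s\<in>leaves N.
   set (map (hcount N) (filter (\<lambda>p. last p = s) (PS ns es u))) = set (map (hcount N) (filter (\<lambda>p. last p = s) (PS ns es v))))"
proof -
  have "\<And>u s k. (\<exists>p. is_path N u s p \<and> hcount N p = k) \<longleftrightarrow> k \<in> set (map (hcount N) (filter (\<lambda>p. last p = s) (PS ns es u)))"
    using path_PS[OF nN aN gd] by auto
  then show ?thesis unfolding convergent_def by (auto simp: set_eq_iff)
qed

end

lemma rooted_eq:
  assumes "nodes N = set ns" "filter (\<lambda>v. indeg N v = 0) ns = [r]"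
  shows "rooted N \<and> root N = r"
proof -
  have "{v. v \<in> nodes N \<and> indeg N v = 0} = {r}"
    using arg_cong[OF assms(2), of set] assms(1) by auto
  then have e: "\<And>v. (v \<in> nodes N \<and> indeg N v = 0) \<longleftrightarrow> v = r" unfolding set_eq_iff by simp
  then show ?thesis unfolding rooted_def root_def by auto
qed

lemma acyc:
  assumes "\<forall>(a,b)\<in>arcs N. (a::nat) < b"
  shows "\<forall>v. (v, v) \<notin> (arcs N)\<^sup>+"
proof -
  have "(x,y) \<in> (arcs N)\<^sup>+ \<Longrightarrow> x < y" for x y
    by (induction rule: trancl_induct) (use assms in auto)
  then show ?thesis by blast
qed

lemma stc:
  fixes \<tau> :: "'v \<Rightarrow> nat"
  assumes "\<forall>(a,b)\<in>arcs N. (b \<in> hyb N \<longrightarrow> \<tau> a = \<tau> b) \<and> (b \<notin> hyb N \<longrightarrow> \<tau> a < \<tau> b)"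
  shows "strong_time_consistent N"
proof -
  have le: "(x,y) \<in> (tc_step N)\<^sup>* \<Longrightarrow> \<tau> x \<le> \<tau> y" for x y
  proof (induction rule: rtrancl_induct)
    case base then show ?case by simp
  next
    case (step y z)
    have "(y,z) \<in> arcs N \<or> ((z,y) \<in> arcs N \<and> y \<in> hyb N)" using step(2)
      by (auto simp: tc_step_def network_arcs_def)
    then have "\<tau> y \<le> \<tau> z"
    proof
      assume yz: "(y,z) \<in> arcs N"
      show ?thesis using assms yz by (cases "z \<in> hyb N") fastforce+
    next
      assume "(z,y) \<in> arcs N \<and> y \<in> hyb N"
      then show ?thesis using assms by fastforce
    qed
    then show ?case using step(3) by simp
  qed
  have lt: "(x,y) \<in> (tc_step N)\<^sup>* O tree_arcs N O (tc_step N)\<^sup>* \<Longrightarrow> \<tau> x < \<tau> y" for x y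
  proof -
    assume "(x,y) \<in> (tc_step N)\<^sup>* O tree_arcs N O (tc_step N)\<^sup>*"
    then obtain a b where "(x,a) \<in> (tc_step N)\<^sup>*" "(a,b) \<in> tree_arcs N" "(b,y) \<in> (tc_step N)\<^sup>*" by blast
    moreover have "\<tau> a < \<tau> b" using \<open>(a,b) \<in> tree_arcs N\<close> assms by (auto simp: tree_arcs_def)
    ultimately show ?thesis using le[of x a] le[of b y] by linarith
  qed
  have eq: "(x,h) \<in> arcs N \<Longrightarrow> (y,h) \<in> arcs N \<Longrightarrow> h \<in> hyb N \<Longrightarrow> \<tau> x = \<tau> y" for x y h
  proof -
    assume "(x,h) \<in> arcs N" "(y,h) \<in> arcs N" "h \<in> hyb N"
    then have "\<tau> x = \<tau> h" "\<tau> y = \<tau> h" using assms by (fastforce dest: bspec)+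
    then show ?thesis by simp
  qed
  show ?thesis unfolding strong_time_consistent_def
  proof (intro allI impI notI)
    fix x y assume xy: "(x, y) \<in> (tc_step N)\<^sup>* O tree_arcs N O (tc_step N)\<^sup>*"
      and "\<exists>h\<in>hyb N. (x, h) \<in> arcs N \<and> (y, h) \<in> arcs N"
    then obtain h where "h \<in> hyb N" "(x, h) \<in> arcs N" "(y, h) \<in> arcs N" by blast
    then have "\<tau> x = \<tau> y" by (rule eq[rotated 2])
    with lt[OF xy] show False by simp
  qed
qed

lemma bij_eq: "distinct xs \<Longrightarrow> bij_betw f (set xs) B \<longleftrightarrow> distinct (map f xs) \<and> set (map f xs) = B"
  by (auto simp: bij_betw_def distinct_map)

lemma indeg_eq2:
  assumes "nodes N = set ns" "arcs N = set es" "good ns es"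
  shows "indeg N v = card (set (map fst (filter (\<lambda>e. snd e = v) es)))"
proof -
  have g: "(a,b) \<in> set es \<Longrightarrow> a \<in> set ns \<and> b \<in> set ns" for a b
    using assms(3) unfolding good_def by (drule_tac x="(a,b)" in bspec) auto
  have m: "u \<in> set (map fst (filter (\<lambda>e. snd e = v) es)) \<longleftrightarrow> (u, v) \<in> set es" for u
  proof
    assume "u \<in> set (map fst (filter (\<lambda>e. snd e = v) es))"
    then obtain e where "e \<in> set es" "snd e = v" "u = fst e" by auto
    then show "(u, v) \<in> set es" by (metis prod.collapse)
  next
    assume "(u, v) \<in> set es"
    then have fi: "(u,v) \<in> set (filter (\<lambda>e. snd e = v) es)" by simp
    show "u \<in> set (map fst (filter (\<lambda>e. snd e = v) es))" unfolding set_map by (rule image_eqI[where x="(u,v)", OF _ fi]) simp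
  qed
  have "{u \<in> nodes N. (u, v) \<in> arcs N} = set (map fst (filter (\<lambda>e. snd e = v) es))"
    using g m assms(1,2) by blast
  then show ?thesis by (simp add: indeg_def)
qed

lemma outdeg_eq2:
  assumes "nodes N = set ns" "arcs N = set es" "good ns es"
  shows "outdeg N v = card (set (map snd (filter (\<lambda>e. fst e = v) es)))"
proof -
  have g: "(a,b) \<in> set es \<Longrightarrow> a \<in> set ns \<and> b \<in> set ns" for a b
    using assms(3) unfolding good_def by (drule_tac x="(a,b)" in bspec) auto
  have m: "u \<in> set (map snd (filter (\<lambda>e. fst e = v) es)) \<longleftrightarrow> (v, u) \<in> set es" for u
  proof
    assume "u \<in> set (map snd (filter (\<lambda>e. fst e = v) es))"
    then obtain e where "e \<in> set es" "fst e = v" "u = snd e" by auto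
    then show "(v, u) \<in> set es" by (metis prod.collapse)
  next
    assume "(v, u) \<in> set es"
    then have fi: "(v,u) \<in> set (filter (\<lambda>e. fst e = v) es)" by simp
    show "u \<in> set (map snd (filter (\<lambda>e. fst e = v) es))" unfolding set_map by (rule image_eqI[where x="(v,u)", OF _ fi]) simp
  qed
  have "{u \<in> nodes N. (v, u) \<in> arcs N} = set (map snd (filter (\<lambda>e. fst e = v) es))"
    using g m assms(1,2) by blast
  then show ?thesis by (simp add: outdeg_def)
qed

lemma Cset_eq2:
  assumes "nodes N = set ns" "arcs N = set es" "good ns es"
  shows "Cset N u = leaves N \<inter> set (map last (PS ns es u))"
  using Cset_eq[OF assms] by auto

lemma Aset_eq2:
  assumes "nodes N = set ns" "arcs N = set es" "good ns es"
  shows "Aset N u = leaves N - set (map last (filter (\<lambda>p. u \<notin> set p) (PS ns es (root N))))"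
  using Aset_eq[OF assms] by auto

definition hcs :: "(nat,'b) net_scheme \<Rightarrow> nat list \<Rightarrow> (nat\<times>nat) list \<Rightarrow> nat \<Rightarrow> nat \<Rightarrow> nat set" where
  "hcs N ns es v s = set (map (hcount N) (filter (\<lambda>p. last p = s) (PS ns es v)))"

definition keyn :: "(nat,'b) net_scheme \<Rightarrow> nat list \<Rightarrow> (nat\<times>nat) list \<Rightarrow> nat list \<Rightarrow> nat \<Rightarrow> nat list list" where
  "keyn N ns es L v = map sorted_list_of_set (map (hcs N ns es v) L)"

lemma classI_check:
  assumes "nodes N = set ns" "arcs N = set es" "good ns es" "set L \<subseteq> leaves N"
    "distinct (map (keyn N ns es L) xs)" "set ns \<subseteq> set xs"
  shows "class_I N"
  unfolding class_I_def
proof (intro ballI impI notI)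
  fix u v assume uv: "u \<in> nodes N" "v \<in> nodes N" "u \<noteq> v" and c: "convergent N u v"
  have "\<forall>s\<in>leaves N. hcs N ns es u s = hcs N ns es v s"
    using c convergent_eq[OF assms(1-3)] by (simp add: hcs_def)
  then have mq: "map (hcs N ns es u) L = map (hcs N ns es v) L" using assms(4) by (intro map_cong refl) blast
  have "keyn N ns es L u = keyn N ns es L v" unfolding keyn_def mq by (rule refl)
  moreover have "inj_on (keyn N ns es L) (set ns)" using assms(5,6) by (auto simp: distinct_map intro: inj_on_subset)
  ultimately show False using uv assms(1) by (auto dest: inj_onD)
qed

lemma set_sub_idx:
  "list_all2 (\<lambda>x j. j < length ys \<and> ys ! j = x) xs js \<Longrightarrow> set xs \<subseteq> set ys"
proof (induction xs arbitrary: js)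
  case Nil then show ?case by simp
next
  case (Cons x xs)
  then obtain j js' where "js = j # js'" "j < length ys" "ys ! j = x" "list_all2 (\<lambda>x j. j < length ys \<and> ys ! j = x) xs js'"
    by (cases js) auto
  then show ?case using Cons.IH by (auto simp: in_set_conv_nth)
qed

lemma model_check:
  fixes N :: "(nat,'b) net_scheme" and \<tau> :: "nat \<Rightarrow> nat" and es :: "(nat\<times>nat) list"
  defines "od \<equiv> \<lambda>v. card (set (map snd (filter (\<lambda>e. fst e = v) es)))"
    and "id' \<equiv> \<lambda>v. card (set (map fst (filter (\<lambda>e. snd e = v) es)))"
  assumes nN: "nodes N = set ns" and aN: "arcs N = set es" and hN: "hyb N = set hs"
    and gd: "good ns es"
    and rt: "filter (\<lambda>v. id' v = 0) ns = [r]"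
    and lv: "leaves N = set lvs" and dl: "distinct lvs"
    and bj: "distinct (map (lbl N) lvs) \<and> set (map (lbl N) lvs) = S"
    and c1: "od r = 2"
    and c2: "\<forall>v\<in>set ns - set hs. v \<notin> set lvs \<longrightarrow> od v = 2"
    and c3: "\<forall>v\<in>set hs. od v = 1 \<and> (id' v = 1 \<or> id' v = 2)"
    and c4: "\<forall>v\<in>set ns. id' v = 2 \<longrightarrow> v \<in> set hs"
    and c5: "\<forall>v\<in>set ns. id' v \<noteq> 1 \<and> id' v \<noteq> 2 \<longrightarrow> v \<notin> set hs"
    and c6: "\<forall>(a,b)\<in>set es. a \<in> set hs \<longrightarrow> b \<notin> set hs"
    and c7: "set hs \<subseteq> set ns"
    and c8: "\<forall>(a,b)\<in>set es. (b \<in> set hs \<longrightarrow> \<tau> a = \<tau> b) \<and> (b \<notin> set hs \<longrightarrow> \<tau> a < \<tau> b)"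
  shows "model_network N S"
proof -
  have idg: "indeg N v = id' v" for v using indeg_eq2[OF nN aN gd] by (simp add: id'_def)
  have odg: "outdeg N v = od v" for v using outdeg_eq2[OF nN aN gd] by (simp add: od_def)
  have rr: "rooted N \<and> root N = r" using rooted_eq[OF nN] rt by (simp add: idg)
  have ga: "(a,b) \<in> set es \<Longrightarrow> a < b \<and> a \<in> set ns \<and> b \<in> set ns" for a b
    using gd unfolding good_def by (drule_tac x="(a,b)" in bspec) auto
  have sub: "arcs N \<subseteq> nodes N \<times> nodes N" using ga nN aN by auto
  have ac: "\<forall>v. (v, v) \<notin> (arcs N)\<^sup>+" by (rule acyc) (use ga aN in auto)
  have bij: "bij_betw (lbl N) (leaves N) S" unfolding lv bij_eq[OF dl] using bj by simp
  have st: "strong_time_consistent N" by (rule stc[where \<tau>=\<tau>]) (use c8 aN hN in auto)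
  have c6': "\<forall>h\<in>hyb N. \<forall>w. (h, w) \<in> arcs N \<longrightarrow> w \<notin> hyb N"
    using c6 aN hN by fast
  show ?thesis unfolding model_network_def labeled_dag_def
    using nN sub ac bij rr c1 c2 c3 c4 c5 c6' c7 st lv hN aN
    by (simp add: idg odg)
qed

lemma PS_table:
  assumes "\<forall>u\<in>set ns. PS ns es u = (case map_of T u of Some ps \<Rightarrow> ps | None \<Rightarrow> [])"
    and "map fst T = ns"
  shows "PS ns es = (\<lambda>u. case map_of T u of Some ps \<Rightarrow> ps | None \<Rightarrow> [])"
proof
  fix u show "PS ns es u = (case map_of T u of Some ps \<Rightarrow> ps | None \<Rightarrow> [])"
  proof (cases "u \<in> set ns")
    case True then show ?thesis using assms(1) by blast
  next
    case False
    have "fst ` set T = set ns" using assms(2) by (metis list.set_map)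
    then have "map_of T u = None" using False by (simp add: map_of_eq_None_iff)
    then show ?thesis using False by (simp add: PS_def)
  qed
qed

definition ns3 :: "nat list" where "ns3 = [0..<35]"
definition es3 :: "(nat\<times>nat) list" where "es3 = [(1,2), (1,3), (2,4), (4,5), (3,6), (4,7), (6,7), (6,8), (5,9), (8,9), (7,10), (5,11), (10,11), (8,12), (10,12), (9,13), (11,14), (12,15), (0,1), (0,16), (16,25), (16,17), (17,26), (17,18), (18,27), (18,19), (19,28), (19,20), (20,29), (20,21), (21,30), (21,22), (22,31), (22,23), (23,32), (23,24), (24,33), (24,34)]"
definition hs3 :: "nat list" where "hs3 = [2, 3, 7, 9, 11, 12]"
definition lab3 :: "(nat\<times>nat) list" where "lab3 = [(13,1), (14,2), (15,3), (25,4), (26,5), (27,6), (28,7), (29,8), (30,9), (31,10), (32,11), (33,12), (34,13)]"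
definition tau3 :: "nat list" where "tau3 = [0, 1, 1, 1, 2, 3, 2, 2, 3, 3, 3, 3, 3, 4, 4, 4, 1, 2, 3, 4, 5, 6, 7, 8, 9, 2, 3, 4, 5, 6, 7, 8, 9, 10, 10]"
definition N3 :: "nat net" where "N3 = \<lparr>nodes = set ns3, arcs = set es3, hyb = set hs3, lbl = (\<lambda>v. case map_of lab3 v of Some l \<Rightarrow> l | None \<Rightarrow> 0)\<rparr>"
definition TL3 where "TL3 = [(set [], set [(1,2), (2,3), (3,3)], set [4, 5, 6, 7, 8, 9, 10, 11, 12, 13]), (set [], set [(1,2), (2,3), (3,3)], set [4, 5, 6, 7, 8, 9, 10, 11, 12, 13]), (set [], set [(1,1), (2,2), (3,2)], set [4, 5, 6, 7, 8, 9, 10, 11, 12, 13]), (set [], set [(1,1), (2,1)], set [3, 4, 5, 6, 7, 8, 9, 10, 11, 12, 13]), (set [], set [(1,1), (2,2), (3,2)], set [4, 5, 6, 7, 8, 9, 10, 11, 12, 13]), (set [], set [(2,2), (3,2)], set [1, 4, 5, 6, 7, 8, 9, 10, 11, 12, 13]), (set [], set [(2,2), (3,2)], set [1, 4, 5, 6, 7, 8, 9, 10, 11, 12, 13]), (set [], set [(1,1), (3,1)], set [2, 4, 5, 6, 7, 8, 9, 10, 11, 12, 13]), (set [(1,1)], set [], set [2, 3, 4, 5, 6, 7, 8, 9, 10, 11, 12, 13]), (set [(1,1)], set [], set [2, 3, 4, 5, 6, 7, 8, 9, 10, 11, 12, 13]), (set [], set [(2,1), (3,1)], set [1, 4, 5,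 6, 7, 8, 9, 10, 11, 12, 13]), (set [(2,1)], set [], set [1, 3, 4, 5, 6, 7, 8, 9, 10, 11, 12, 13]), (set [(2,1)], set [], set [1, 3, 4, 5, 6, 7, 8, 9, 10, 11, 12, 13]), (set [(3,1)], set [], set [1, 2, 4, 5, 6, 7, 8, 9, 10, 11, 12, 13]), (set [(3,1)], set [], set [1, 2, 4, 5, 6, 7, 8, 9, 10, 11, 12, 13]), (set [(1,0)], set [], set [2, 3, 4, 5, 6, 7, 8, 9, 10, 11, 12, 13]), (set [(2,0)], set [], set [1, 3, 4, 5, 6, 7, 8, 9, 10, 11, 12, 13]), (set [(3,0)], set [], set [1, 2, 4, 5, 6, 7, 8, 9, 10, 11, 12, 13]), (set [(1,2), (2,3), (3,3)], set [], set [4, 5, 6, 7, 8, 9, 10, 11, 12, 13]), (set [(4,0), (5,0), (6,0), (7,0), (8,0), (9,0), (10,0), (11,0), (12,0), (13,0)], set [], set [1, 2, 3]), (set [(4,0)], set [], set [1, 2, 3, 5, 6, 7, 8, 9, 10, 11, 12, 13]), (set [(5,0), (6,0), (7,0), (8,0), (9,0), (10,0), (11,0), (12,0), (13,0)], set [], set [1, 2, 3, 4]), (set [(5,0)], set [], set [1, 2, 3, 4, 6, 7, 8, 9, 10, 11, 12, 13]), (set [(6,0), (7,0), (8,0), (9,0), (10,0), (11,0), (12,0), (13,0)], set [], set [1, 2, 3, 4, 5]), (set [(6,0)], set [], set [1, 2, 3, 4, 5, 7, 8, 9, 10, 11, 12, 13]), (set [(7,0), (8,0), (9,0), (10,0),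 (11,0), (12,0), (13,0)], set [], set [1, 2, 3, 4, 5, 6]), (set [(7,0)], set [], set [1, 2, 3, 4, 5, 6, 8, 9, 10, 11, 12, 13]), (set [(8,0), (9,0), (10,0), (11,0), (12,0), (13,0)], set [], set [1, 2, 3, 4, 5, 6, 7]), (set [(8,0)], set [], set [1, 2, 3, 4, 5, 6, 7, 9, 10, 11, 12, 13]), (set [(9,0), (10,0), (11,0), (12,0), (13,0)], set [], set [1, 2, 3, 4, 5, 6, 7, 8]), (set [(9,0)], set [], set [1, 2, 3, 4, 5, 6, 7, 8, 10, 11, 12, 13]), (set [(10,0), (11,0), (12,0), (13,0)], set [], set [1, 2, 3, 4, 5, 6, 7, 8, 9]), (set [(10,0)], set [], set [1, 2, 3, 4, 5, 6, 7, 8, 9, 11, 12, 13]), (set [(11,0), (12,0), (13,0)], set [], set [1, 2, 3, 4, 5, 6, 7, 8, 9, 10]), (set [(11,0)], set [], set [1, 2, 3, 4, 5, 6, 7, 8, 9, 10, 12, 13]), (set [(12,0), (13,0)], set [], set [1, 2, 3, 4, 5, 6, 7, 8, 9, 10, 11]), (set [(12,0)], set [], set [1, 2, 3, 4, 5, 6, 7, 8, 9, 10, 11, 13]), (set [(13,0)], set [], set [1, 2, 3, 4, 5, 6, 7, 8, 9, 10, 11, 12])]"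

lemma n3: "nodes N3 = set ns3" "arcs N3 = set es3" "hyb N3 = set hs3" by (simp_all add: N3_def)
lemma g3: "good ns3 es3" by code_simp
lemma hc3: "hcount N3 = (\<lambda>p. length (filter (\<lambda>x. x \<in> set hs3) p))" by (rule ext) (simp add: hcount_def n3)
lemma lb3: "lbl N3 = (\<lambda>v. case map_of lab3 v of Some l \<Rightarrow> l | None \<Rightarrow> 0)" by (simp add: N3_def)
lemma r3: "rooted N3 \<and> root N3 = 0"
  by (rule rooted_eq[OF n3(1)]) (simp only: indeg_eq2[OF n3(1,2) g3]; code_simp)
lemma lv3: "leaves N3 = set [13, 14, 15, 25, 26, 27, 28, 29, 30, 31, 32, 33, 34]"
  by (simp only: leaves_eq outdeg_eq2[OF n3(1,2) g3] n3; code_simp)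

lemma m3: "model_network N3 {1..13}"
  by (rule model_check[OF n3 g3 _ lv3, where r=0 and \<tau>="\<lambda>v. tau3 ! v"]) ((simp only: atLeastAtMost_upt)?, code_simp)+

lemma PS3_0: "PS ns3 es3 0 = [[0], [0, 1], [0, 1, 2], [0, 1, 2, 4], [0, 1, 2, 4, 5], [0, 1, 2, 4, 5, 9], [0, 1, 2, 4, 5, 9, 13], [0, 1, 2, 4, 5, 11], [0, 1, 2, 4, 5, 11, 14], [0, 1, 2, 4, 7], [0, 1, 2, 4, 7, 10], [0, 1, 2, 4, 7, 10, 11], [0, 1, 2, 4, 7, 10, 11, 14], [0, 1, 2, 4, 7, 10, 12], [0, 1, 2, 4, 7, 10, 12, 15], [0, 1, 3], [0, 1, 3, 6], [0, 1, 3, 6, 7], [0, 1, 3, 6, 7, 10], [0, 1, 3, 6, 7, 10, 11], [0, 1, 3, 6, 7, 10, 11, 14], [0, 1, 3, 6, 7, 10, 12], [0, 1, 3, 6, 7, 10, 12, 15], [0, 1, 3, 6, 8], [0, 1, 3, 6, 8, 9], [0, 1, 3, 6, 8, 9, 13], [0, 1, 3, 6, 8, 12], [0, 1, 3, 6, 8, 12, 15], [0, 16], [0, 16, 25], [0, 16, 17], [0, 16, 17, 26], [0, 16, 17, 18], [0, 16, 17, 18, 27], [0, 16, 17, 18, 19], [0, 16, 17, 18, 19, 28], [0, 16, 17, 18, 19, 20], [0, 16, 17, 18, 19, 20, 29], [0, 16, 17, 18, 19, 20, 21], [0, 16, 17, 18, 19, 20, 21, 30], [0, 16, 17, 18, 19,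 20, 21, 22], [0, 16, 17, 18, 19, 20, 21, 22, 31], [0, 16, 17, 18, 19, 20, 21, 22, 23], [0, 16, 17, 18, 19, 20, 21, 22, 23, 32], [0, 16, 17, 18, 19, 20, 21, 22, 23, 24], [0, 16, 17, 18, 19, 20, 21, 22, 23, 24, 33], [0, 16, 17, 18, 19, 20, 21, 22, 23, 24, 34]]" by code_simp
lemma PS3_1: "PS ns3 es3 1 = [[1], [1, 2], [1, 2, 4], [1, 2, 4, 5], [1, 2, 4, 5, 9], [1, 2, 4, 5, 9, 13], [1, 2, 4, 5, 11], [1, 2, 4, 5, 11, 14], [1, 2, 4, 7], [1, 2, 4, 7, 10], [1, 2, 4, 7, 10, 11], [1, 2, 4, 7, 10, 11, 14], [1, 2, 4, 7, 10, 12], [1, 2, 4, 7, 10, 12, 15], [1, 3], [1, 3, 6], [1, 3, 6, 7], [1, 3, 6, 7, 10], [1, 3, 6, 7, 10, 11], [1, 3, 6, 7, 10, 11, 14], [1, 3, 6, 7, 10, 12], [1, 3, 6, 7, 10, 12, 15], [1, 3, 6, 8], [1, 3, 6, 8, 9], [1, 3, 6, 8, 9, 13], [1, 3, 6, 8, 12], [1, 3, 6, 8, 12, 15]]" by code_simp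
lemma PS3_2: "PS ns3 es3 2 = [[2], [2, 4], [2, 4, 5], [2, 4, 5, 9], [2, 4, 5, 9, 13], [2, 4, 5, 11], [2, 4, 5, 11, 14], [2, 4, 7], [2, 4, 7, 10], [2, 4, 7, 10, 11], [2, 4, 7, 10, 11, 14], [2, 4, 7, 10, 12], [2, 4, 7, 10, 12, 15]]" by code_simp
lemma PS3_3: "PS ns3 es3 3 = [[3], [3, 6], [3, 6, 7], [3, 6, 7, 10], [3, 6, 7, 10, 11], [3, 6, 7, 10, 11, 14], [3, 6, 7, 10, 12], [3, 6, 7, 10, 12, 15], [3, 6, 8], [3, 6, 8, 9], [3, 6, 8, 9, 13], [3, 6, 8, 12], [3, 6, 8, 12, 15]]" by code_simp
lemma PS3_4: "PS ns3 es3 4 = [[4], [4, 5], [4, 5, 9], [4, 5, 9, 13], [4, 5, 11], [4, 5, 11, 14], [4, 7], [4, 7, 10], [4, 7, 10, 11], [4, 7, 10, 11, 14], [4, 7, 10, 12], [4, 7, 10, 12, 15]]" by code_simp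
lemma PS3_5: "PS ns3 es3 5 = [[5], [5, 9], [5, 9, 13], [5, 11], [5, 11, 14]]" by code_simp
lemma PS3_6: "PS ns3 es3 6 = [[6], [6, 7], [6, 7, 10], [6, 7, 10, 11], [6, 7, 10, 11, 14], [6, 7, 10, 12], [6, 7, 10, 12, 15], [6, 8], [6, 8, 9], [6, 8, 9, 13], [6, 8, 12], [6, 8, 12, 15]]" by code_simp
lemma PS3_7: "PS ns3 es3 7 = [[7], [7, 10], [7, 10, 11], [7, 10, 11, 14], [7, 10, 12], [7, 10, 12, 15]]" by code_simp
lemma PS3_8: "PS ns3 es3 8 = [[8], [8, 9], [8, 9, 13], [8, 12], [8, 12, 15]]" by code_simp
lemma PS3_9: "PS ns3 es3 9 = [[9], [9, 13]]" by code_simp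
lemma PS3_10: "PS ns3 es3 10 = [[10], [10, 11], [10, 11, 14], [10, 12], [10, 12, 15]]" by code_simp
lemma PS3_11: "PS ns3 es3 11 = [[11], [11, 14]]" by code_simp
lemma PS3_12: "PS ns3 es3 12 = [[12], [12, 15]]" by code_simp
lemma PS3_13: "PS ns3 es3 13 = [[13]]" by code_simp
lemma PS3_14: "PS ns3 es3 14 = [[14]]" by code_simp
lemma PS3_15: "PS ns3 es3 15 = [[15]]" by code_simp
lemma PS3_16: "PS ns3 es3 16 = [[16], [16, 25], [16, 17], [16, 17, 26], [16, 17, 18], [16, 17, 18, 27], [16, 17, 18, 19], [16, 17, 18, 19, 28], [16, 17, 18, 19, 20], [16, 17, 18, 19, 20, 29], [16, 17, 18, 19, 20, 21], [16, 17, 18, 19, 20, 21, 30], [16, 17, 18, 19, 20, 21, 22], [16, 17, 18, 19, 20, 21, 22, 31], [16, 17, 18, 19, 20, 21, 22, 23], [16, 17, 18, 19, 20, 21, 22, 23, 32], [16, 17, 18, 19, 20, 21, 22, 23, 24], [16, 17, 18, 19, 20, 21, 22, 23, 24, 33], [16, 17, 18, 19, 20, 21, 22, 23, 24, 34]]" by code_simp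
lemma PS3_17: "PS ns3 es3 17 = [[17], [17, 26], [17, 18], [17, 18, 27], [17, 18, 19], [17, 18, 19, 28], [17, 18, 19, 20], [17, 18, 19, 20, 29], [17, 18, 19, 20, 21], [17, 18, 19, 20, 21, 30], [17, 18, 19, 20, 21, 22], [17, 18, 19, 20, 21, 22, 31], [17, 18, 19, 20, 21, 22, 23], [17, 18, 19, 20, 21, 22, 23, 32], [17, 18, 19, 20, 21, 22, 23, 24], [17, 18, 19, 20, 21, 22, 23, 24, 33], [17, 18, 19, 20, 21, 22, 23, 24, 34]]" by code_simp
lemma PS3_18: "PS ns3 es3 18 = [[18], [18, 27], [18, 19], [18, 19, 28], [18, 19, 20], [18, 19, 20, 29], [18, 19, 20, 21], [18, 19, 20, 21, 30], [18, 19, 20, 21, 22], [18, 19, 20, 21, 22, 31], [18, 19, 20, 21, 22, 23], [18, 19, 20, 21, 22, 23, 32], [18, 19, 20, 21, 22, 23, 24], [18, 19, 20, 21, 22, 23, 24, 33], [18, 19, 20, 21, 22, 23, 24, 34]]" by code_simp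
lemma PS3_19: "PS ns3 es3 19 = [[19], [19, 28], [19, 20], [19, 20, 29], [19, 20, 21], [19, 20, 21, 30], [19, 20, 21, 22], [19, 20, 21, 22, 31], [19, 20, 21, 22, 23], [19, 20, 21, 22, 23, 32], [19, 20, 21, 22, 23, 24], [19, 20, 21, 22, 23, 24, 33], [19, 20, 21, 22, 23, 24, 34]]" by code_simp
lemma PS3_20: "PS ns3 es3 20 = [[20], [20, 29], [20, 21], [20, 21, 30], [20, 21, 22], [20, 21, 22, 31], [20, 21, 22, 23], [20, 21, 22, 23, 32], [20, 21, 22, 23, 24], [20, 21, 22, 23, 24, 33], [20, 21, 22, 23, 24, 34]]" by code_simp
lemma PS3_21: "PS ns3 es3 21 = [[21], [21, 30], [21, 22], [21, 22, 31], [21, 22, 23], [21, 22, 23, 32], [21, 22, 23, 24], [21, 22, 23, 24, 33], [21, 22, 23, 24, 34]]" by code_simp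
lemma PS3_22: "PS ns3 es3 22 = [[22], [22, 31], [22, 23], [22, 23, 32], [22, 23, 24], [22, 23, 24, 33], [22, 23, 24, 34]]" by code_simp
lemma PS3_23: "PS ns3 es3 23 = [[23], [23, 32], [23, 24], [23, 24, 33], [23, 24, 34]]" by code_simp
lemma PS3_24: "PS ns3 es3 24 = [[24], [24, 33], [24, 34]]" by code_simp
lemma PS3_25: "PS ns3 es3 25 = [[25]]" by code_simp
lemma PS3_26: "PS ns3 es3 26 = [[26]]" by code_simp
lemma PS3_27: "PS ns3 es3 27 = [[27]]" by code_simp
lemma PS3_28: "PS ns3 es3 28 = [[28]]" by code_simp
lemma PS3_29: "PS ns3 es3 29 = [[29]]" by code_simp
lemma PS3_30: "PS ns3 es3 30 = [[30]]" by code_simp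
lemma PS3_31: "PS ns3 es3 31 = [[31]]" by code_simp
lemma PS3_32: "PS ns3 es3 32 = [[32]]" by code_simp
lemma PS3_33: "PS ns3 es3 33 = [[33]]" by code_simp
lemma PS3_34: "PS ns3 es3 34 = [[34]]" by code_simp
lemmas PS3s = PS3_0 PS3_1 PS3_2 PS3_3 PS3_4 PS3_5 PS3_6 PS3_7 PS3_8 PS3_9 PS3_10 PS3_11 PS3_12 PS3_13 PS3_14 PS3_15 PS3_16 PS3_17 PS3_18 PS3_19 PS3_20 PS3_21 PS3_22 PS3_23 PS3_24 PS3_25 PS3_26 PS3_27 PS3_28 PS3_29 PS3_30 PS3_31 PS3_32 PS3_33 PS3_34
lemma th3_0: "theta_arc N3 {1..13} (1,2) = (set [], set [(1,2), (2,3), (3,3)], set [4, 5, 6, 7, 8, 9, 10, 11, 12, 13])"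
  unfolding theta_arc_def Let_def snd_conv Bset_def Cset_eq2[OF n3(1,2) g3] Aset_eq2[OF n3(1,2) g3]
      hweight_eq[OF n3(1,2) g3] lv3 r3[THEN conjunct2] PS3s hc3 lb3 atLeastAtMost_upt
  by code_simp
lemma th3_1: "theta_arc N3 {1..13} (1,3) = (set [], set [(1,2), (2,3), (3,3)], set [4, 5, 6, 7, 8, 9, 10, 11, 12, 13])"
  unfolding theta_arc_def Let_def snd_conv Bset_def Cset_eq2[OF n3(1,2) g3] Aset_eq2[OF n3(1,2) g3]
      hweight_eq[OF n3(1,2) g3] lv3 r3[THEN conjunct2] PS3s hc3 lb3 atLeastAtMost_upt
  by code_simp
lemma th3_2: "theta_arc N3 {1..13} (2,4) = (set [], set [(1,1), (2,2), (3,2)], set [4, 5, 6, 7, 8, 9, 10, 11, 12, 13])"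
  unfolding theta_arc_def Let_def snd_conv Bset_def Cset_eq2[OF n3(1,2) g3] Aset_eq2[OF n3(1,2) g3]
      hweight_eq[OF n3(1,2) g3] lv3 r3[THEN conjunct2] PS3s hc3 lb3 atLeastAtMost_upt
  by code_simp
lemma th3_3: "theta_arc N3 {1..13} (4,5) = (set [], set [(1,1), (2,1)], set [3, 4, 5, 6, 7, 8, 9, 10, 11, 12, 13])"
  unfolding theta_arc_def Let_def snd_conv Bset_def Cset_eq2[OF n3(1,2) g3] Aset_eq2[OF n3(1,2) g3]
      hweight_eq[OF n3(1,2) g3] lv3 r3[THEN conjunct2] PS3s hc3 lb3 atLeastAtMost_upt
  by code_simp
lemma th3_4: "theta_arc N3 {1..13} (3,6) = (set [], set [(1,1), (2,2), (3,2)], set [4, 5, 6, 7, 8, 9, 10, 11, 12, 13])"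
  unfolding theta_arc_def Let_def snd_conv Bset_def Cset_eq2[OF n3(1,2) g3] Aset_eq2[OF n3(1,2) g3]
      hweight_eq[OF n3(1,2) g3] lv3 r3[THEN conjunct2] PS3s hc3 lb3 atLeastAtMost_upt
  by code_simp
lemma th3_5: "theta_arc N3 {1..13} (4,7) = (set [], set [(2,2), (3,2)], set [1, 4, 5, 6, 7, 8, 9, 10, 11, 12, 13])"
  unfolding theta_arc_def Let_def snd_conv Bset_def Cset_eq2[OF n3(1,2) g3] Aset_eq2[OF n3(1,2) g3]
      hweight_eq[OF n3(1,2) g3] lv3 r3[THEN conjunct2] PS3s hc3 lb3 atLeastAtMost_upt
  by code_simp
lemma th3_6: "theta_arc N3 {1..13} (6,7) = (set [], set [(2,2), (3,2)], set [1, 4, 5, 6, 7, 8, 9, 10, 11, 12, 13])"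
  unfolding theta_arc_def Let_def snd_conv Bset_def Cset_eq2[OF n3(1,2) g3] Aset_eq2[OF n3(1,2) g3]
      hweight_eq[OF n3(1,2) g3] lv3 r3[THEN conjunct2] PS3s hc3 lb3 atLeastAtMost_upt
  by code_simp
lemma th3_7: "theta_arc N3 {1..13} (6,8) = (set [], set [(1,1), (3,1)], set [2, 4, 5, 6, 7, 8, 9, 10, 11, 12, 13])"
  unfolding theta_arc_def Let_def snd_conv Bset_def Cset_eq2[OF n3(1,2) g3] Aset_eq2[OF n3(1,2) g3]
      hweight_eq[OF n3(1,2) g3] lv3 r3[THEN conjunct2] PS3s hc3 lb3 atLeastAtMost_upt
  by code_simp
lemma th3_8: "theta_arc N3 {1..13} (5,9) = (set [(1,1)], set [], set [2, 3, 4, 5, 6, 7, 8, 9, 10, 11, 12, 13])"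
  unfolding theta_arc_def Let_def snd_conv Bset_def Cset_eq2[OF n3(1,2) g3] Aset_eq2[OF n3(1,2) g3]
      hweight_eq[OF n3(1,2) g3] lv3 r3[THEN conjunct2] PS3s hc3 lb3 atLeastAtMost_upt
  by code_simp
lemma th3_9: "theta_arc N3 {1..13} (8,9) = (set [(1,1)], set [], set [2, 3, 4, 5, 6, 7, 8, 9, 10, 11, 12, 13])"
  unfolding theta_arc_def Let_def snd_conv Bset_def Cset_eq2[OF n3(1,2) g3] Aset_eq2[OF n3(1,2) g3]
      hweight_eq[OF n3(1,2) g3] lv3 r3[THEN conjunct2] PS3s hc3 lb3 atLeastAtMost_upt
  by code_simp
lemma th3_10: "theta_arc N3 {1..13} (7,10) = (set [], set [(2,1), (3,1)], set [1, 4, 5, 6, 7, 8, 9, 10, 11, 12, 13])"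
  unfolding theta_arc_def Let_def snd_conv Bset_def Cset_eq2[OF n3(1,2) g3] Aset_eq2[OF n3(1,2) g3]
      hweight_eq[OF n3(1,2) g3] lv3 r3[THEN conjunct2] PS3s hc3 lb3 atLeastAtMost_upt
  by code_simp
lemma th3_11: "theta_arc N3 {1..13} (5,11) = (set [(2,1)], set [], set [1, 3, 4, 5, 6, 7, 8, 9, 10, 11, 12, 13])"
  unfolding theta_arc_def Let_def snd_conv Bset_def Cset_eq2[OF n3(1,2) g3] Aset_eq2[OF n3(1,2) g3]
      hweight_eq[OF n3(1,2) g3] lv3 r3[THEN conjunct2] PS3s hc3 lb3 atLeastAtMost_upt
  by code_simp
lemma th3_12: "theta_arc N3 {1..13} (10,11) = (set [(2,1)], set [], set [1, 3, 4, 5, 6, 7, 8, 9, 10, 11, 12, 13])"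
  unfolding theta_arc_def Let_def snd_conv Bset_def Cset_eq2[OF n3(1,2) g3] Aset_eq2[OF n3(1,2) g3]
      hweight_eq[OF n3(1,2) g3] lv3 r3[THEN conjunct2] PS3s hc3 lb3 atLeastAtMost_upt
  by code_simp
lemma th3_13: "theta_arc N3 {1..13} (8,12) = (set [(3,1)], set [], set [1, 2, 4, 5, 6, 7, 8, 9, 10, 11, 12, 13])"
  unfolding theta_arc_def Let_def snd_conv Bset_def Cset_eq2[OF n3(1,2) g3] Aset_eq2[OF n3(1,2) g3]
      hweight_eq[OF n3(1,2) g3] lv3 r3[THEN conjunct2] PS3s hc3 lb3 atLeastAtMost_upt
  by code_simp
lemma th3_14: "theta_arc N3 {1..13} (10,12) = (set [(3,1)], set [], set [1, 2, 4, 5, 6, 7, 8, 9, 10, 11, 12, 13])"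
  unfolding theta_arc_def Let_def snd_conv Bset_def Cset_eq2[OF n3(1,2) g3] Aset_eq2[OF n3(1,2) g3]
      hweight_eq[OF n3(1,2) g3] lv3 r3[THEN conjunct2] PS3s hc3 lb3 atLeastAtMost_upt
  by code_simp
lemma th3_15: "theta_arc N3 {1..13} (9,13) = (set [(1,0)], set [], set [2, 3, 4, 5, 6, 7, 8, 9, 10, 11, 12, 13])"
  unfolding theta_arc_def Let_def snd_conv Bset_def Cset_eq2[OF n3(1,2) g3] Aset_eq2[OF n3(1,2) g3]
      hweight_eq[OF n3(1,2) g3] lv3 r3[THEN conjunct2] PS3s hc3 lb3 atLeastAtMost_upt
  by code_simp
lemma th3_16: "theta_arc N3 {1..13} (11,14) = (set [(2,0)], set [], set [1, 3, 4, 5, 6, 7, 8, 9, 10, 11, 12, 13])"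
  unfolding theta_arc_def Let_def snd_conv Bset_def Cset_eq2[OF n3(1,2) g3] Aset_eq2[OF n3(1,2) g3]
      hweight_eq[OF n3(1,2) g3] lv3 r3[THEN conjunct2] PS3s hc3 lb3 atLeastAtMost_upt
  by code_simp
lemma th3_17: "theta_arc N3 {1..13} (12,15) = (set [(3,0)], set [], set [1, 2, 4, 5, 6, 7, 8, 9, 10, 11, 12, 13])"
  unfolding theta_arc_def Let_def snd_conv Bset_def Cset_eq2[OF n3(1,2) g3] Aset_eq2[OF n3(1,2) g3]
      hweight_eq[OF n3(1,2) g3] lv3 r3[THEN conjunct2] PS3s hc3 lb3 atLeastAtMost_upt
  by code_simp
lemma th3_18: "theta_arc N3 {1..13} (0,1) = (set [(1,2), (2,3), (3,3)], set [], set [4, 5, 6, 7, 8, 9, 10, 11, 12, 13])"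
  unfolding theta_arc_def Let_def snd_conv Bset_def Cset_eq2[OF n3(1,2) g3] Aset_eq2[OF n3(1,2) g3]
      hweight_eq[OF n3(1,2) g3] lv3 r3[THEN conjunct2] PS3s hc3 lb3 atLeastAtMost_upt
  by code_simp
lemma th3_19: "theta_arc N3 {1..13} (0,16) = (set [(4,0), (5,0), (6,0), (7,0), (8,0), (9,0), (10,0), (11,0), (12,0), (13,0)], set [], set [1, 2, 3])"
  unfolding theta_arc_def Let_def snd_conv Bset_def Cset_eq2[OF n3(1,2) g3] Aset_eq2[OF n3(1,2) g3]
      hweight_eq[OF n3(1,2) g3] lv3 r3[THEN conjunct2] PS3s hc3 lb3 atLeastAtMost_upt
  by code_simp
lemma th3_20: "theta_arc N3 {1..13} (16,25) = (set [(4,0)], set [], set [1, 2, 3, 5, 6, 7, 8, 9, 10, 11, 12, 13])"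
  unfolding theta_arc_def Let_def snd_conv Bset_def Cset_eq2[OF n3(1,2) g3] Aset_eq2[OF n3(1,2) g3]
      hweight_eq[OF n3(1,2) g3] lv3 r3[THEN conjunct2] PS3s hc3 lb3 atLeastAtMost_upt
  by code_simp
lemma th3_21: "theta_arc N3 {1..13} (16,17) = (set [(5,0), (6,0), (7,0), (8,0), (9,0), (10,0), (11,0), (12,0), (13,0)], set [], set [1, 2, 3, 4])"
  unfolding theta_arc_def Let_def snd_conv Bset_def Cset_eq2[OF n3(1,2) g3] Aset_eq2[OF n3(1,2) g3]
      hweight_eq[OF n3(1,2) g3] lv3 r3[THEN conjunct2] PS3s hc3 lb3 atLeastAtMost_upt
  by code_simp
lemma th3_22: "theta_arc N3 {1..13} (17,26) = (set [(5,0)], set [], set [1, 2, 3, 4, 6, 7, 8, 9, 10, 11, 12, 13])"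
  unfolding theta_arc_def Let_def snd_conv Bset_def Cset_eq2[OF n3(1,2) g3] Aset_eq2[OF n3(1,2) g3]
      hweight_eq[OF n3(1,2) g3] lv3 r3[THEN conjunct2] PS3s hc3 lb3 atLeastAtMost_upt
  by code_simp
lemma th3_23: "theta_arc N3 {1..13} (17,18) = (set [(6,0), (7,0), (8,0), (9,0), (10,0), (11,0), (12,0), (13,0)], set [], set [1, 2, 3, 4, 5])"
  unfolding theta_arc_def Let_def snd_conv Bset_def Cset_eq2[OF n3(1,2) g3] Aset_eq2[OF n3(1,2) g3]
      hweight_eq[OF n3(1,2) g3] lv3 r3[THEN conjunct2] PS3s hc3 lb3 atLeastAtMost_upt
  by code_simp
lemma th3_24: "theta_arc N3 {1..13} (18,27) = (set [(6,0)], set [], set [1, 2, 3, 4, 5, 7, 8, 9, 10, 11, 12, 13])"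
  unfolding theta_arc_def Let_def snd_conv Bset_def Cset_eq2[OF n3(1,2) g3] Aset_eq2[OF n3(1,2) g3]
      hweight_eq[OF n3(1,2) g3] lv3 r3[THEN conjunct2] PS3s hc3 lb3 atLeastAtMost_upt
  by code_simp
lemma th3_25: "theta_arc N3 {1..13} (18,19) = (set [(7,0), (8,0), (9,0), (10,0), (11,0), (12,0), (13,0)], set [], set [1, 2, 3, 4, 5, 6])"
  unfolding theta_arc_def Let_def snd_conv Bset_def Cset_eq2[OF n3(1,2) g3] Aset_eq2[OF n3(1,2) g3]
      hweight_eq[OF n3(1,2) g3] lv3 r3[THEN conjunct2] PS3s hc3 lb3 atLeastAtMost_upt
  by code_simp
lemma th3_26: "theta_arc N3 {1..13} (19,28) = (set [(7,0)], set [], set [1, 2, 3, 4, 5, 6, 8, 9, 10, 11, 12, 13])"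
  unfolding theta_arc_def Let_def snd_conv Bset_def Cset_eq2[OF n3(1,2) g3] Aset_eq2[OF n3(1,2) g3]
      hweight_eq[OF n3(1,2) g3] lv3 r3[THEN conjunct2] PS3s hc3 lb3 atLeastAtMost_upt
  by code_simp
lemma th3_27: "theta_arc N3 {1..13} (19,20) = (set [(8,0), (9,0), (10,0), (11,0), (12,0), (13,0)], set [], set [1, 2, 3, 4, 5, 6, 7])"
  unfolding theta_arc_def Let_def snd_conv Bset_def Cset_eq2[OF n3(1,2) g3] Aset_eq2[OF n3(1,2) g3]
      hweight_eq[OF n3(1,2) g3] lv3 r3[THEN conjunct2] PS3s hc3 lb3 atLeastAtMost_upt
  by code_simp
lemma th3_28: "theta_arc N3 {1..13} (20,29) = (set [(8,0)], set [], set [1, 2, 3, 4, 5, 6, 7, 9, 10, 11, 12, 13])"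
  unfolding theta_arc_def Let_def snd_conv Bset_def Cset_eq2[OF n3(1,2) g3] Aset_eq2[OF n3(1,2) g3]
      hweight_eq[OF n3(1,2) g3] lv3 r3[THEN conjunct2] PS3s hc3 lb3 atLeastAtMost_upt
  by code_simp
lemma th3_29: "theta_arc N3 {1..13} (20,21) = (set [(9,0), (10,0), (11,0), (12,0), (13,0)], set [], set [1, 2, 3, 4, 5, 6, 7, 8])"
  unfolding theta_arc_def Let_def snd_conv Bset_def Cset_eq2[OF n3(1,2) g3] Aset_eq2[OF n3(1,2) g3]
      hweight_eq[OF n3(1,2) g3] lv3 r3[THEN conjunct2] PS3s hc3 lb3 atLeastAtMost_upt
  by code_simp
lemma th3_30: "theta_arc N3 {1..13} (21,30) = (set [(9,0)], set [], set [1, 2, 3, 4, 5, 6, 7, 8, 10, 11, 12, 13])"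
  unfolding theta_arc_def Let_def snd_conv Bset_def Cset_eq2[OF n3(1,2) g3] Aset_eq2[OF n3(1,2) g3]
      hweight_eq[OF n3(1,2) g3] lv3 r3[THEN conjunct2] PS3s hc3 lb3 atLeastAtMost_upt
  by code_simp
lemma th3_31: "theta_arc N3 {1..13} (21,22) = (set [(10,0), (11,0), (12,0), (13,0)], set [], set [1, 2, 3, 4, 5, 6, 7, 8, 9])"
  unfolding theta_arc_def Let_def snd_conv Bset_def Cset_eq2[OF n3(1,2) g3] Aset_eq2[OF n3(1,2) g3]
      hweight_eq[OF n3(1,2) g3] lv3 r3[THEN conjunct2] PS3s hc3 lb3 atLeastAtMost_upt
  by code_simp
lemma th3_32: "theta_arc N3 {1..13} (22,31) = (set [(10,0)], set [], set [1, 2, 3, 4, 5, 6, 7, 8, 9, 11, 12, 13])"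
  unfolding theta_arc_def Let_def snd_conv Bset_def Cset_eq2[OF n3(1,2) g3] Aset_eq2[OF n3(1,2) g3]
      hweight_eq[OF n3(1,2) g3] lv3 r3[THEN conjunct2] PS3s hc3 lb3 atLeastAtMost_upt
  by code_simp
lemma th3_33: "theta_arc N3 {1..13} (22,23) = (set [(11,0), (12,0), (13,0)], set [], set [1, 2, 3, 4, 5, 6, 7, 8, 9, 10])"
  unfolding theta_arc_def Let_def snd_conv Bset_def Cset_eq2[OF n3(1,2) g3] Aset_eq2[OF n3(1,2) g3]
      hweight_eq[OF n3(1,2) g3] lv3 r3[THEN conjunct2] PS3s hc3 lb3 atLeastAtMost_upt
  by code_simp
lemma th3_34: "theta_arc N3 {1..13} (23,32) = (set [(11,0)], set [], set [1, 2, 3, 4, 5, 6, 7, 8, 9, 10, 12, 13])"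
  unfolding theta_arc_def Let_def snd_conv Bset_def Cset_eq2[OF n3(1,2) g3] Aset_eq2[OF n3(1,2) g3]
      hweight_eq[OF n3(1,2) g3] lv3 r3[THEN conjunct2] PS3s hc3 lb3 atLeastAtMost_upt
  by code_simp
lemma th3_35: "theta_arc N3 {1..13} (23,24) = (set [(12,0), (13,0)], set [], set [1, 2, 3, 4, 5, 6, 7, 8, 9, 10, 11])"
  unfolding theta_arc_def Let_def snd_conv Bset_def Cset_eq2[OF n3(1,2) g3] Aset_eq2[OF n3(1,2) g3]
      hweight_eq[OF n3(1,2) g3] lv3 r3[THEN conjunct2] PS3s hc3 lb3 atLeastAtMost_upt
  by code_simp
lemma th3_36: "theta_arc N3 {1..13} (24,33) = (set [(12,0)], set [], set [1, 2, 3, 4, 5, 6, 7, 8, 9, 10, 11, 13])"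
  unfolding theta_arc_def Let_def snd_conv Bset_def Cset_eq2[OF n3(1,2) g3] Aset_eq2[OF n3(1,2) g3]
      hweight_eq[OF n3(1,2) g3] lv3 r3[THEN conjunct2] PS3s hc3 lb3 atLeastAtMost_upt
  by code_simp
lemma th3_37: "theta_arc N3 {1..13} (24,34) = (set [(13,0)], set [], set [1, 2, 3, 4, 5, 6, 7, 8, 9, 10, 11, 12])"
  unfolding theta_arc_def Let_def snd_conv Bset_def Cset_eq2[OF n3(1,2) g3] Aset_eq2[OF n3(1,2) g3]
      hweight_eq[OF n3(1,2) g3] lv3 r3[THEN conjunct2] PS3s hc3 lb3 atLeastAtMost_upt
  by code_simp
lemmas th3s = th3_0 th3_1 th3_2 th3_3 th3_4 th3_5 th3_6 th3_7 th3_8 th3_9 th3_10 th3_11 th3_12 th3_13 th3_14 th3_15 th3_16 th3_17 th3_18 th3_19 th3_20 th3_21 th3_22 th3_23 th3_24 th3_25 th3_26 th3_27 th3_28 th3_29 th3_30 th3_31 th3_32 th3_33 th3_34 th3_35 th3_36 th3_37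

lemma th3: "theta_AB N3 {1..13} = set TL3"
proof -
  have "map (theta_arc N3 {1..13}) es3 = TL3"
    by (simp only: es3_def TL3_def list.map th3s)
  then show ?thesis unfolding theta_AB_def n3(2) set_map[symmetric] by simp
qed

lemma c3: "class_I N3"
  apply (rule classI_check[OF n3(1,2) g3, where L="[13, 14, 15, 25, 26, 27, 28, 29, 30, 31, 32, 33, 34]" and xs="[0, 1, 2, 3, 4, 5, 6, 7, 8, 9, 10, 11, 12, 13, 14, 15, 16, 17, 18, 19, 20, 21, 22, 23, 24, 25, 26, 27, 28, 29, 30, 31, 32, 33, 34]"])
    apply (simp add: lv3)
  unfolding list.map keyn_def hcs_def PS3s hc3
   apply code_simp
  apply code_simp
  done

definition ns4 :: "nat list" where "ns4 = [0..<34]"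
definition es4 :: "(nat\<times>nat) list" where "es4 = [(1,2), (2,3), (1,4), (3,5), (4,5), (5,6), (3,7), (4,8), (7,9), (8,9), (6,10), (8,10), (6,11), (7,11), (9,12), (10,13), (11,14), (0,1), (0,15), (15,24), (15,16), (16,25), (16,17), (17,26), (17,18), (18,27), (18,19), (19,28), (19,20), (20,29), (20,21), (21,30), (21,22), (22,31), (22,23), (23,32), (23,33)]"
definition hs4 :: "nat list" where "hs4 = [2, 5, 9, 10, 11]"
definition lab4 :: "(nat\<times>nat) list" where "lab4 = [(12,1), (13,2), (14,3), (24,4), (25,5), (26,6), (27,7), (28,8), (29,9), (30,10), (31,11), (32,12), (33,13)]"
definition tau4 :: "nat list" where "tau4 = [0, 1, 1, 2, 2, 2, 3, 3, 3, 3, 3, 3, 4, 4, 4, 1, 2, 3, 4, 5, 6, 7, 8, 9, 2, 3, 4, 5, 6, 7, 8, 9, 10, 10]"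
definition N4 :: "nat net" where "N4 = \<lparr>nodes = set ns4, arcs = set es4, hyb = set hs4, lbl = (\<lambda>v. case map_of lab4 v of Some l \<Rightarrow> l | None \<Rightarrow> 0)\<rparr>"
definition TL4 where "TL4 = [(set [], set [(1,2), (2,3), (3,3)], set [4, 5, 6, 7, 8, 9, 10, 11, 12, 13]), (set [], set [(1,1), (2,2), (3,2)], set [4, 5, 6, 7, 8, 9, 10, 11, 12, 13]), (set [], set [(1,1), (2,2), (3,2)], set [4, 5, 6, 7, 8, 9, 10, 11, 12, 13]), (set [], set [(2,2), (3,2)], set [1, 4, 5, 6, 7, 8, 9, 10, 11, 12, 13]), (set [], set [(2,2), (3,2)], set [1, 4, 5, 6, 7, 8, 9, 10, 11, 12, 13]), (set [], set [(2,1), (3,1)], set [1, 4, 5, 6, 7, 8, 9, 10, 11, 12, 13]), (set [], set [(1,1), (3,1)], set [2, 4, 5, 6, 7, 8, 9, 10, 11, 12, 13]), (set [], set [(1,1), (2,1)], set [3, 4, 5, 6, 7, 8, 9, 10, 11, 12, 13]), (set [(1,1)], set [], set [2, 3, 4, 5, 6, 7, 8, 9, 10, 11, 12, 13]), (set [(1,1)], set [], set [2, 3, 4, 5, 6, 7, 8, 9, 10, 11, 12, 13]), (set [(2,1)], set [], set [1, 3, 4, 5, 6, 7, 8, 9, 10, 11, 12, 13]), (set [(2,1)], set [], set [1, 3, 4, 5, 6, 7, 8, 9, 10, 11, 12, 13]), (set [(3,1)], set [], set [1, 2, 4, 5, 6, 7, 8, 9, 10, 11, 12, 13]), (set [(3,1)],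 set [], set [1, 2, 4, 5, 6, 7, 8, 9, 10, 11, 12, 13]), (set [(1,0)], set [], set [2, 3, 4, 5, 6, 7, 8, 9, 10, 11, 12, 13]), (set [(2,0)], set [], set [1, 3, 4, 5, 6, 7, 8, 9, 10, 11, 12, 13]), (set [(3,0)], set [], set [1, 2, 4, 5, 6, 7, 8, 9, 10, 11, 12, 13]), (set [(1,2), (2,3), (3,3)], set [], set [4, 5, 6, 7, 8, 9, 10, 11, 12, 13]), (set [(4,0), (5,0), (6,0), (7,0), (8,0), (9,0), (10,0), (11,0), (12,0), (13,0)], set [], set [1, 2, 3]), (set [(4,0)], set [], set [1, 2, 3, 5, 6, 7, 8, 9, 10, 11, 12, 13]), (set [(5,0), (6,0), (7,0), (8,0), (9,0), (10,0), (11,0), (12,0), (13,0)], set [], set [1, 2, 3, 4]), (set [(5,0)], set [], set [1, 2, 3, 4, 6, 7, 8, 9, 10, 11, 12, 13]), (set [(6,0), (7,0), (8,0), (9,0), (10,0), (11,0), (12,0), (13,0)], set [], set [1, 2, 3, 4, 5]), (set [(6,0)], set [], set [1, 2, 3, 4, 5, 7, 8, 9, 10, 11, 12, 13]), (set [(7,0), (8,0), (9,0), (10,0), (11,0), (12,0), (13,0)], set [], set [1, 2, 3, 4, 5, 6]), (set [(7,0)], set [], set [1, 2, 3, 4, 5, 6, 8, 9, 10, 11, 12, 13]), (set [(8,0), (9,0), (10,0), (11,0), (12,0), (13,0)], set [], set [1, 2, 3, 4, 5, 6, 7]), (set [(8,0)], set [], set [1, 2, 3, 4, 5, 6, 7,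 9, 10, 11, 12, 13]), (set [(9,0), (10,0), (11,0), (12,0), (13,0)], set [], set [1, 2, 3, 4, 5, 6, 7, 8]), (set [(9,0)], set [], set [1, 2, 3, 4, 5, 6, 7, 8, 10, 11, 12, 13]), (set [(10,0), (11,0), (12,0), (13,0)], set [], set [1, 2, 3, 4, 5, 6, 7, 8, 9]), (set [(10,0)], set [], set [1, 2, 3, 4, 5, 6, 7, 8, 9, 11, 12, 13]), (set [(11,0), (12,0), (13,0)], set [], set [1, 2, 3, 4, 5, 6, 7, 8, 9, 10]), (set [(11,0)], set [], set [1, 2, 3, 4, 5, 6, 7, 8, 9, 10, 12, 13]), (set [(12,0), (13,0)], set [], set [1, 2, 3, 4, 5, 6, 7, 8, 9, 10, 11]), (set [(12,0)], set [], set [1, 2, 3, 4, 5, 6, 7, 8, 9, 10, 11, 13]), (set [(13,0)], set [], set [1, 2, 3, 4, 5, 6, 7, 8, 9, 10, 11, 12])]"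

lemma n4: "nodes N4 = set ns4" "arcs N4 = set es4" "hyb N4 = set hs4" by (simp_all add: N4_def)
lemma g4: "good ns4 es4" by code_simp
lemma hc4: "hcount N4 = (\<lambda>p. length (filter (\<lambda>x. x \<in> set hs4) p))" by (rule ext) (simp add: hcount_def n4)
lemma lb4: "lbl N4 = (\<lambda>v. case map_of lab4 v of Some l \<Rightarrow> l | None \<Rightarrow> 0)" by (simp add: N4_def)
lemma r4: "rooted N4 \<and> root N4 = 0"
  by (rule rooted_eq[OF n4(1)]) (simp only: indeg_eq2[OF n4(1,2) g4]; code_simp)
lemma lv4: "leaves N4 = set [12, 13, 14, 24, 25, 26, 27, 28, 29, 30, 31, 32, 33]"
  by (simp only: leaves_eq outdeg_eq2[OF n4(1,2) g4] n4; code_simp)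

lemma m4: "model_network N4 {1..13}"
  by (rule model_check[OF n4 g4 _ lv4, where r=0 and \<tau>="\<lambda>v. tau4 ! v"]) ((simp only: atLeastAtMost_upt)?, code_simp)+

lemma PS4_0: "PS ns4 es4 0 = [[0], [0, 1], [0, 1, 2], [0, 1, 2, 3], [0, 1, 2, 3, 5], [0, 1, 2, 3, 5, 6], [0, 1, 2, 3, 5, 6, 10], [0, 1, 2, 3, 5, 6, 10, 13], [0, 1, 2, 3, 5, 6, 11], [0, 1, 2, 3, 5, 6, 11, 14], [0, 1, 2, 3, 7], [0, 1, 2, 3, 7, 9], [0, 1, 2, 3, 7, 9, 12], [0, 1, 2, 3, 7, 11], [0, 1, 2, 3, 7, 11, 14], [0, 1, 4], [0, 1, 4, 5], [0, 1, 4, 5, 6], [0, 1, 4, 5, 6, 10], [0, 1, 4, 5, 6, 10, 13], [0, 1, 4, 5, 6, 11], [0, 1, 4, 5, 6, 11, 14], [0, 1, 4, 8], [0, 1, 4, 8, 9], [0, 1, 4, 8, 9, 12], [0, 1, 4, 8, 10], [0, 1, 4, 8, 10, 13], [0, 15], [0, 15, 24], [0, 15, 16], [0, 15, 16, 25], [0, 15, 16, 17], [0, 15, 16, 17, 26], [0, 15, 16, 17, 18], [0, 15, 16, 17, 18, 27], [0, 15, 16, 17, 18, 19], [0, 15, 16, 17, 18, 19, 28], [0, 15, 16, 17, 18, 19, 20], [0, 15, 16, 17, 18, 19, 20, 29], [0, 15, 16, 17, 18, 19, 20, 21], [0, 15, 16, 17, 18, 19, 20, 21, 30], [0, 15, 16,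 17, 18, 19, 20, 21, 22], [0, 15, 16, 17, 18, 19, 20, 21, 22, 31], [0, 15, 16, 17, 18, 19, 20, 21, 22, 23], [0, 15, 16, 17, 18, 19, 20, 21, 22, 23, 32], [0, 15, 16, 17, 18, 19, 20, 21, 22, 23, 33]]" by code_simp
lemma PS4_1: "PS ns4 es4 1 = [[1], [1, 2], [1, 2, 3], [1, 2, 3, 5], [1, 2, 3, 5, 6], [1, 2, 3, 5, 6, 10], [1, 2, 3, 5, 6, 10, 13], [1, 2, 3, 5, 6, 11], [1, 2, 3, 5, 6, 11, 14], [1, 2, 3, 7], [1, 2, 3, 7, 9], [1, 2, 3, 7, 9, 12], [1, 2, 3, 7, 11], [1, 2, 3, 7, 11, 14], [1, 4], [1, 4, 5], [1, 4, 5, 6], [1, 4, 5, 6, 10], [1, 4, 5, 6, 10, 13], [1, 4, 5, 6, 11], [1, 4, 5, 6, 11, 14], [1, 4, 8], [1, 4, 8, 9], [1, 4, 8, 9, 12], [1, 4, 8, 10], [1, 4, 8, 10, 13]]" by code_simp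
lemma PS4_2: "PS ns4 es4 2 = [[2], [2, 3], [2, 3, 5], [2, 3, 5, 6], [2, 3, 5, 6, 10], [2, 3, 5, 6, 10, 13], [2, 3, 5, 6, 11], [2, 3, 5, 6, 11, 14], [2, 3, 7], [2, 3, 7, 9], [2, 3, 7, 9, 12], [2, 3, 7, 11], [2, 3, 7, 11, 14]]" by code_simp
lemma PS4_3: "PS ns4 es4 3 = [[3], [3, 5], [3, 5, 6], [3, 5, 6, 10], [3, 5, 6, 10, 13], [3, 5, 6, 11], [3, 5, 6, 11, 14], [3, 7], [3, 7, 9], [3, 7, 9, 12], [3, 7, 11], [3, 7, 11, 14]]" by code_simp
lemma PS4_4: "PS ns4 es4 4 = [[4], [4, 5], [4, 5, 6], [4, 5, 6, 10], [4, 5, 6, 10, 13], [4, 5, 6, 11], [4, 5, 6, 11, 14], [4, 8], [4, 8, 9], [4, 8, 9, 12], [4, 8, 10], [4, 8, 10, 13]]" by code_simp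
lemma PS4_5: "PS ns4 es4 5 = [[5], [5, 6], [5, 6, 10], [5, 6, 10, 13], [5, 6, 11], [5, 6, 11, 14]]" by code_simp
lemma PS4_6: "PS ns4 es4 6 = [[6], [6, 10], [6, 10, 13], [6, 11], [6, 11, 14]]" by code_simp
lemma PS4_7: "PS ns4 es4 7 = [[7], [7, 9], [7, 9, 12], [7, 11], [7, 11, 14]]" by code_simp
lemma PS4_8: "PS ns4 es4 8 = [[8], [8, 9], [8, 9, 12], [8, 10], [8, 10, 13]]" by code_simp
lemma PS4_9: "PS ns4 es4 9 = [[9], [9, 12]]" by code_simp
lemma PS4_10: "PS ns4 es4 10 = [[10], [10, 13]]" by code_simp
lemma PS4_11: "PS ns4 es4 11 = [[11], [11, 14]]" by code_simp
lemma PS4_12: "PS ns4 es4 12 = [[12]]" by code_simp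
lemma PS4_13: "PS ns4 es4 13 = [[13]]" by code_simp
lemma PS4_14: "PS ns4 es4 14 = [[14]]" by code_simp
lemma PS4_15: "PS ns4 es4 15 = [[15], [15, 24], [15, 16], [15, 16, 25], [15, 16, 17], [15, 16, 17, 26], [15, 16, 17, 18], [15, 16, 17, 18, 27], [15, 16, 17, 18, 19], [15, 16, 17, 18, 19, 28], [15, 16, 17, 18, 19, 20], [15, 16, 17, 18, 19, 20, 29], [15, 16, 17, 18, 19, 20, 21], [15, 16, 17, 18, 19, 20, 21, 30], [15, 16, 17, 18, 19, 20, 21, 22], [15, 16, 17, 18, 19, 20, 21, 22, 31], [15, 16, 17, 18, 19, 20, 21, 22, 23], [15, 16, 17, 18, 19, 20, 21, 22, 23, 32], [15, 16, 17, 18, 19, 20, 21, 22, 23, 33]]" by code_simp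
lemma PS4_16: "PS ns4 es4 16 = [[16], [16, 25], [16, 17], [16, 17, 26], [16, 17, 18], [16, 17, 18, 27], [16, 17, 18, 19], [16, 17, 18, 19, 28], [16, 17, 18, 19, 20], [16, 17, 18, 19, 20, 29], [16, 17, 18, 19, 20, 21], [16, 17, 18, 19, 20, 21, 30], [16, 17, 18, 19, 20, 21, 22], [16, 17, 18, 19, 20, 21, 22, 31], [16, 17, 18, 19, 20, 21, 22, 23], [16, 17, 18, 19, 20, 21, 22, 23, 32], [16, 17, 18, 19, 20, 21, 22, 23, 33]]" by code_simp
lemma PS4_17: "PS ns4 es4 17 = [[17], [17, 26], [17, 18], [17, 18, 27], [17, 18, 19], [17, 18, 19, 28], [17, 18, 19, 20], [17, 18, 19, 20, 29], [17, 18, 19, 20, 21], [17, 18, 19, 20, 21, 30], [17, 18, 19, 20, 21, 22], [17, 18, 19, 20, 21, 22, 31], [17, 18, 19, 20, 21, 22, 23], [17, 18, 19, 20, 21, 22, 23, 32], [17, 18, 19, 20, 21, 22, 23, 33]]" by code_simp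
lemma PS4_18: "PS ns4 es4 18 = [[18], [18, 27], [18, 19], [18, 19, 28], [18, 19, 20], [18, 19, 20, 29], [18, 19, 20, 21], [18, 19, 20, 21, 30], [18, 19, 20, 21, 22], [18, 19, 20, 21, 22, 31], [18, 19, 20, 21, 22, 23], [18, 19, 20, 21, 22, 23, 32], [18, 19, 20, 21, 22, 23, 33]]" by code_simp
lemma PS4_19: "PS ns4 es4 19 = [[19], [19, 28], [19, 20], [19, 20, 29], [19, 20, 21], [19, 20, 21, 30], [19, 20, 21, 22], [19, 20, 21, 22, 31], [19, 20, 21, 22, 23], [19, 20, 21, 22, 23, 32], [19, 20, 21, 22, 23, 33]]" by code_simp
lemma PS4_20: "PS ns4 es4 20 = [[20], [20, 29], [20, 21], [20, 21, 30], [20, 21, 22], [20, 21, 22, 31], [20, 21, 22, 23], [20, 21, 22, 23, 32], [20, 21, 22, 23, 33]]" by code_simp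
lemma PS4_21: "PS ns4 es4 21 = [[21], [21, 30], [21, 22], [21, 22, 31], [21, 22, 23], [21, 22, 23, 32], [21, 22, 23, 33]]" by code_simp
lemma PS4_22: "PS ns4 es4 22 = [[22], [22, 31], [22, 23], [22, 23, 32], [22, 23, 33]]" by code_simp
lemma PS4_23: "PS ns4 es4 23 = [[23], [23, 32], [23, 33]]" by code_simp
lemma PS4_24: "PS ns4 es4 24 = [[24]]" by code_simp
lemma PS4_25: "PS ns4 es4 25 = [[25]]" by code_simp
lemma PS4_26: "PS ns4 es4 26 = [[26]]" by code_simp
lemma PS4_27: "PS ns4 es4 27 = [[27]]" by code_simp
lemma PS4_28: "PS ns4 es4 28 = [[28]]" by code_simp
lemma PS4_29: "PS ns4 es4 29 = [[29]]" by code_simp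
lemma PS4_30: "PS ns4 es4 30 = [[30]]" by code_simp
lemma PS4_31: "PS ns4 es4 31 = [[31]]" by code_simp
lemma PS4_32: "PS ns4 es4 32 = [[32]]" by code_simp
lemma PS4_33: "PS ns4 es4 33 = [[33]]" by code_simp
lemmas PS4s = PS4_0 PS4_1 PS4_2 PS4_3 PS4_4 PS4_5 PS4_6 PS4_7 PS4_8 PS4_9 PS4_10 PS4_11 PS4_12 PS4_13 PS4_14 PS4_15 PS4_16 PS4_17 PS4_18 PS4_19 PS4_20 PS4_21 PS4_22 PS4_23 PS4_24 PS4_25 PS4_26 PS4_27 PS4_28 PS4_29 PS4_30 PS4_31 PS4_32 PS4_33
lemma th4_0: "theta_arc N4 {1..13} (1,2) = (set [], set [(1,2), (2,3), (3,3)], set [4, 5, 6, 7, 8, 9, 10, 11, 12, 13])"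
  unfolding theta_arc_def Let_def snd_conv Bset_def Cset_eq2[OF n4(1,2) g4] Aset_eq2[OF n4(1,2) g4]
      hweight_eq[OF n4(1,2) g4] lv4 r4[THEN conjunct2] PS4s hc4 lb4 atLeastAtMost_upt
  by code_simp
lemma th4_1: "theta_arc N4 {1..13} (2,3) = (set [], set [(1,1), (2,2), (3,2)], set [4, 5, 6, 7, 8, 9, 10, 11, 12, 13])"
  unfolding theta_arc_def Let_def snd_conv Bset_def Cset_eq2[OF n4(1,2) g4] Aset_eq2[OF n4(1,2) g4]
      hweight_eq[OF n4(1,2) g4] lv4 r4[THEN conjunct2] PS4s hc4 lb4 atLeastAtMost_upt
  by code_simp
lemma th4_2: "theta_arc N4 {1..13} (1,4) = (set [], set [(1,1), (2,2), (3,2)], set [4, 5, 6, 7, 8, 9, 10, 11, 12, 13])"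
  unfolding theta_arc_def Let_def snd_conv Bset_def Cset_eq2[OF n4(1,2) g4] Aset_eq2[OF n4(1,2) g4]
      hweight_eq[OF n4(1,2) g4] lv4 r4[THEN conjunct2] PS4s hc4 lb4 atLeastAtMost_upt
  by code_simp
lemma th4_3: "theta_arc N4 {1..13} (3,5) = (set [], set [(2,2), (3,2)], set [1, 4, 5, 6, 7, 8, 9, 10, 11, 12, 13])"
  unfolding theta_arc_def Let_def snd_conv Bset_def Cset_eq2[OF n4(1,2) g4] Aset_eq2[OF n4(1,2) g4]
      hweight_eq[OF n4(1,2) g4] lv4 r4[THEN conjunct2] PS4s hc4 lb4 atLeastAtMost_upt
  by code_simp
lemma th4_4: "theta_arc N4 {1..13} (4,5) = (set [], set [(2,2), (3,2)], set [1, 4, 5, 6, 7, 8, 9, 10, 11, 12, 13])"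
  unfolding theta_arc_def Let_def snd_conv Bset_def Cset_eq2[OF n4(1,2) g4] Aset_eq2[OF n4(1,2) g4]
      hweight_eq[OF n4(1,2) g4] lv4 r4[THEN conjunct2] PS4s hc4 lb4 atLeastAtMost_upt
  by code_simp
lemma th4_5: "theta_arc N4 {1..13} (5,6) = (set [], set [(2,1), (3,1)], set [1, 4, 5, 6, 7, 8, 9, 10, 11, 12, 13])"
  unfolding theta_arc_def Let_def snd_conv Bset_def Cset_eq2[OF n4(1,2) g4] Aset_eq2[OF n4(1,2) g4]
      hweight_eq[OF n4(1,2) g4] lv4 r4[THEN conjunct2] PS4s hc4 lb4 atLeastAtMost_upt
  by code_simp
lemma th4_6: "theta_arc N4 {1..13} (3,7) = (set [], set [(1,1), (3,1)], set [2, 4, 5, 6, 7, 8, 9, 10, 11, 12, 13])"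
  unfolding theta_arc_def Let_def snd_conv Bset_def Cset_eq2[OF n4(1,2) g4] Aset_eq2[OF n4(1,2) g4]
      hweight_eq[OF n4(1,2) g4] lv4 r4[THEN conjunct2] PS4s hc4 lb4 atLeastAtMost_upt
  by code_simp
lemma th4_7: "theta_arc N4 {1..13} (4,8) = (set [], set [(1,1), (2,1)], set [3, 4, 5, 6, 7, 8, 9, 10, 11, 12, 13])"
  unfolding theta_arc_def Let_def snd_conv Bset_def Cset_eq2[OF n4(1,2) g4] Aset_eq2[OF n4(1,2) g4]
      hweight_eq[OF n4(1,2) g4] lv4 r4[THEN conjunct2] PS4s hc4 lb4 atLeastAtMost_upt
  by code_simp
lemma th4_8: "theta_arc N4 {1..13} (7,9) = (set [(1,1)], set [], set [2, 3, 4, 5, 6, 7, 8, 9, 10, 11, 12, 13])"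
  unfolding theta_arc_def Let_def snd_conv Bset_def Cset_eq2[OF n4(1,2) g4] Aset_eq2[OF n4(1,2) g4]
      hweight_eq[OF n4(1,2) g4] lv4 r4[THEN conjunct2] PS4s hc4 lb4 atLeastAtMost_upt
  by code_simp
lemma th4_9: "theta_arc N4 {1..13} (8,9) = (set [(1,1)], set [], set [2, 3, 4, 5, 6, 7, 8, 9, 10, 11, 12, 13])"
  unfolding theta_arc_def Let_def snd_conv Bset_def Cset_eq2[OF n4(1,2) g4] Aset_eq2[OF n4(1,2) g4]
      hweight_eq[OF n4(1,2) g4] lv4 r4[THEN conjunct2] PS4s hc4 lb4 atLeastAtMost_upt
  by code_simp
lemma th4_10: "theta_arc N4 {1..13} (6,10) = (set [(2,1)], set [], set [1, 3, 4, 5, 6, 7, 8, 9, 10, 11, 12, 13])"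
  unfolding theta_arc_def Let_def snd_conv Bset_def Cset_eq2[OF n4(1,2) g4] Aset_eq2[OF n4(1,2) g4]
      hweight_eq[OF n4(1,2) g4] lv4 r4[THEN conjunct2] PS4s hc4 lb4 atLeastAtMost_upt
  by code_simp
lemma th4_11: "theta_arc N4 {1..13} (8,10) = (set [(2,1)], set [], set [1, 3, 4, 5, 6, 7, 8, 9, 10, 11, 12, 13])"
  unfolding theta_arc_def Let_def snd_conv Bset_def Cset_eq2[OF n4(1,2) g4] Aset_eq2[OF n4(1,2) g4]
      hweight_eq[OF n4(1,2) g4] lv4 r4[THEN conjunct2] PS4s hc4 lb4 atLeastAtMost_upt
  by code_simp
lemma th4_12: "theta_arc N4 {1..13} (6,11) = (set [(3,1)], set [], set [1, 2, 4, 5, 6, 7, 8, 9, 10, 11, 12, 13])"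
  unfolding theta_arc_def Let_def snd_conv Bset_def Cset_eq2[OF n4(1,2) g4] Aset_eq2[OF n4(1,2) g4]
      hweight_eq[OF n4(1,2) g4] lv4 r4[THEN conjunct2] PS4s hc4 lb4 atLeastAtMost_upt
  by code_simp
lemma th4_13: "theta_arc N4 {1..13} (7,11) = (set [(3,1)], set [], set [1, 2, 4, 5, 6, 7, 8, 9, 10, 11, 12, 13])"
  unfolding theta_arc_def Let_def snd_conv Bset_def Cset_eq2[OF n4(1,2) g4] Aset_eq2[OF n4(1,2) g4]
      hweight_eq[OF n4(1,2) g4] lv4 r4[THEN conjunct2] PS4s hc4 lb4 atLeastAtMost_upt
  by code_simp
lemma th4_14: "theta_arc N4 {1..13} (9,12) = (set [(1,0)], set [], set [2, 3, 4, 5, 6, 7, 8, 9, 10, 11, 12, 13])"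
  unfolding theta_arc_def Let_def snd_conv Bset_def Cset_eq2[OF n4(1,2) g4] Aset_eq2[OF n4(1,2) g4]
      hweight_eq[OF n4(1,2) g4] lv4 r4[THEN conjunct2] PS4s hc4 lb4 atLeastAtMost_upt
  by code_simp
lemma th4_15: "theta_arc N4 {1..13} (10,13) = (set [(2,0)], set [], set [1, 3, 4, 5, 6, 7, 8, 9, 10, 11, 12, 13])"
  unfolding theta_arc_def Let_def snd_conv Bset_def Cset_eq2[OF n4(1,2) g4] Aset_eq2[OF n4(1,2) g4]
      hweight_eq[OF n4(1,2) g4] lv4 r4[THEN conjunct2] PS4s hc4 lb4 atLeastAtMost_upt
  by code_simp
lemma th4_16: "theta_arc N4 {1..13} (11,14) = (set [(3,0)], set [], set [1, 2, 4, 5, 6, 7, 8, 9, 10, 11, 12, 13])"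
  unfolding theta_arc_def Let_def snd_conv Bset_def Cset_eq2[OF n4(1,2) g4] Aset_eq2[OF n4(1,2) g4]
      hweight_eq[OF n4(1,2) g4] lv4 r4[THEN conjunct2] PS4s hc4 lb4 atLeastAtMost_upt
  by code_simp
lemma th4_17: "theta_arc N4 {1..13} (0,1) = (set [(1,2), (2,3), (3,3)], set [], set [4, 5, 6, 7, 8, 9, 10, 11, 12, 13])"
  unfolding theta_arc_def Let_def snd_conv Bset_def Cset_eq2[OF n4(1,2) g4] Aset_eq2[OF n4(1,2) g4]
      hweight_eq[OF n4(1,2) g4] lv4 r4[THEN conjunct2] PS4s hc4 lb4 atLeastAtMost_upt
  by code_simp
lemma th4_18: "theta_arc N4 {1..13} (0,15) = (set [(4,0), (5,0), (6,0), (7,0), (8,0), (9,0), (10,0), (11,0), (12,0), (13,0)], set [], set [1, 2, 3])"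
  unfolding theta_arc_def Let_def snd_conv Bset_def Cset_eq2[OF n4(1,2) g4] Aset_eq2[OF n4(1,2) g4]
      hweight_eq[OF n4(1,2) g4] lv4 r4[THEN conjunct2] PS4s hc4 lb4 atLeastAtMost_upt
  by code_simp
lemma th4_19: "theta_arc N4 {1..13} (15,24) = (set [(4,0)], set [], set [1, 2, 3, 5, 6, 7, 8, 9, 10, 11, 12, 13])"
  unfolding theta_arc_def Let_def snd_conv Bset_def Cset_eq2[OF n4(1,2) g4] Aset_eq2[OF n4(1,2) g4]
      hweight_eq[OF n4(1,2) g4] lv4 r4[THEN conjunct2] PS4s hc4 lb4 atLeastAtMost_upt
  by code_simp
lemma th4_20: "theta_arc N4 {1..13} (15,16) = (set [(5,0), (6,0), (7,0), (8,0), (9,0), (10,0), (11,0), (12,0), (13,0)], set [], set [1, 2, 3, 4])"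
  unfolding theta_arc_def Let_def snd_conv Bset_def Cset_eq2[OF n4(1,2) g4] Aset_eq2[OF n4(1,2) g4]
      hweight_eq[OF n4(1,2) g4] lv4 r4[THEN conjunct2] PS4s hc4 lb4 atLeastAtMost_upt
  by code_simp
lemma th4_21: "theta_arc N4 {1..13} (16,25) = (set [(5,0)], set [], set [1, 2, 3, 4, 6, 7, 8, 9, 10, 11, 12, 13])"
  unfolding theta_arc_def Let_def snd_conv Bset_def Cset_eq2[OF n4(1,2) g4] Aset_eq2[OF n4(1,2) g4]
      hweight_eq[OF n4(1,2) g4] lv4 r4[THEN conjunct2] PS4s hc4 lb4 atLeastAtMost_upt
  by code_simp
lemma th4_22: "theta_arc N4 {1..13} (16,17) = (set [(6,0), (7,0), (8,0), (9,0), (10,0), (11,0), (12,0), (13,0)], set [], set [1, 2, 3, 4, 5])"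
  unfolding theta_arc_def Let_def snd_conv Bset_def Cset_eq2[OF n4(1,2) g4] Aset_eq2[OF n4(1,2) g4]
      hweight_eq[OF n4(1,2) g4] lv4 r4[THEN conjunct2] PS4s hc4 lb4 atLeastAtMost_upt
  by code_simp
lemma th4_23: "theta_arc N4 {1..13} (17,26) = (set [(6,0)], set [], set [1, 2, 3, 4, 5, 7, 8, 9, 10, 11, 12, 13])"
  unfolding theta_arc_def Let_def snd_conv Bset_def Cset_eq2[OF n4(1,2) g4] Aset_eq2[OF n4(1,2) g4]
      hweight_eq[OF n4(1,2) g4] lv4 r4[THEN conjunct2] PS4s hc4 lb4 atLeastAtMost_upt
  by code_simp
lemma th4_24: "theta_arc N4 {1..13} (17,18) = (set [(7,0), (8,0), (9,0), (10,0), (11,0), (12,0), (13,0)], set [], set [1, 2, 3, 4, 5, 6])"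
  unfolding theta_arc_def Let_def snd_conv Bset_def Cset_eq2[OF n4(1,2) g4] Aset_eq2[OF n4(1,2) g4]
      hweight_eq[OF n4(1,2) g4] lv4 r4[THEN conjunct2] PS4s hc4 lb4 atLeastAtMost_upt
  by code_simp
lemma th4_25: "theta_arc N4 {1..13} (18,27) = (set [(7,0)], set [], set [1, 2, 3, 4, 5, 6, 8, 9, 10, 11, 12, 13])"
  unfolding theta_arc_def Let_def snd_conv Bset_def Cset_eq2[OF n4(1,2) g4] Aset_eq2[OF n4(1,2) g4]
      hweight_eq[OF n4(1,2) g4] lv4 r4[THEN conjunct2] PS4s hc4 lb4 atLeastAtMost_upt
  by code_simp
lemma th4_26: "theta_arc N4 {1..13} (18,19) = (set [(8,0), (9,0), (10,0), (11,0), (12,0), (13,0)], set [], set [1, 2, 3, 4, 5, 6, 7])"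
  unfolding theta_arc_def Let_def snd_conv Bset_def Cset_eq2[OF n4(1,2) g4] Aset_eq2[OF n4(1,2) g4]
      hweight_eq[OF n4(1,2) g4] lv4 r4[THEN conjunct2] PS4s hc4 lb4 atLeastAtMost_upt
  by code_simp
lemma th4_27: "theta_arc N4 {1..13} (19,28) = (set [(8,0)], set [], set [1, 2, 3, 4, 5, 6, 7, 9, 10, 11, 12, 13])"
  unfolding theta_arc_def Let_def snd_conv Bset_def Cset_eq2[OF n4(1,2) g4] Aset_eq2[OF n4(1,2) g4]
      hweight_eq[OF n4(1,2) g4] lv4 r4[THEN conjunct2] PS4s hc4 lb4 atLeastAtMost_upt
  by code_simp
lemma th4_28: "theta_arc N4 {1..13} (19,20) = (set [(9,0), (10,0), (11,0), (12,0), (13,0)], set [], set [1, 2, 3, 4, 5, 6, 7, 8])"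
  unfolding theta_arc_def Let_def snd_conv Bset_def Cset_eq2[OF n4(1,2) g4] Aset_eq2[OF n4(1,2) g4]
      hweight_eq[OF n4(1,2) g4] lv4 r4[THEN conjunct2] PS4s hc4 lb4 atLeastAtMost_upt
  by code_simp
lemma th4_29: "theta_arc N4 {1..13} (20,29) = (set [(9,0)], set [], set [1, 2, 3, 4, 5, 6, 7, 8, 10, 11, 12, 13])"
  unfolding theta_arc_def Let_def snd_conv Bset_def Cset_eq2[OF n4(1,2) g4] Aset_eq2[OF n4(1,2) g4]
      hweight_eq[OF n4(1,2) g4] lv4 r4[THEN conjunct2] PS4s hc4 lb4 atLeastAtMost_upt
  by code_simp
lemma th4_30: "theta_arc N4 {1..13} (20,21) = (set [(10,0), (11,0), (12,0), (13,0)], set [], set [1, 2, 3, 4, 5, 6, 7, 8, 9])"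
  unfolding theta_arc_def Let_def snd_conv Bset_def Cset_eq2[OF n4(1,2) g4] Aset_eq2[OF n4(1,2) g4]
      hweight_eq[OF n4(1,2) g4] lv4 r4[THEN conjunct2] PS4s hc4 lb4 atLeastAtMost_upt
  by code_simp
lemma th4_31: "theta_arc N4 {1..13} (21,30) = (set [(10,0)], set [], set [1, 2, 3, 4, 5, 6, 7, 8, 9, 11, 12, 13])"
  unfolding theta_arc_def Let_def snd_conv Bset_def Cset_eq2[OF n4(1,2) g4] Aset_eq2[OF n4(1,2) g4]
      hweight_eq[OF n4(1,2) g4] lv4 r4[THEN conjunct2] PS4s hc4 lb4 atLeastAtMost_upt
  by code_simp
lemma th4_32: "theta_arc N4 {1..13} (21,22) = (set [(11,0), (12,0), (13,0)], set [], set [1, 2, 3, 4, 5, 6, 7, 8, 9, 10])"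
  unfolding theta_arc_def Let_def snd_conv Bset_def Cset_eq2[OF n4(1,2) g4] Aset_eq2[OF n4(1,2) g4]
      hweight_eq[OF n4(1,2) g4] lv4 r4[THEN conjunct2] PS4s hc4 lb4 atLeastAtMost_upt
  by code_simp
lemma th4_33: "theta_arc N4 {1..13} (22,31) = (set [(11,0)], set [], set [1, 2, 3, 4, 5, 6, 7, 8, 9, 10, 12, 13])"
  unfolding theta_arc_def Let_def snd_conv Bset_def Cset_eq2[OF n4(1,2) g4] Aset_eq2[OF n4(1,2) g4]
      hweight_eq[OF n4(1,2) g4] lv4 r4[THEN conjunct2] PS4s hc4 lb4 atLeastAtMost_upt
  by code_simp
lemma th4_34: "theta_arc N4 {1..13} (22,23) = (set [(12,0), (13,0)], set [], set [1, 2, 3, 4, 5, 6, 7, 8, 9, 10, 11])"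
  unfolding theta_arc_def Let_def snd_conv Bset_def Cset_eq2[OF n4(1,2) g4] Aset_eq2[OF n4(1,2) g4]
      hweight_eq[OF n4(1,2) g4] lv4 r4[THEN conjunct2] PS4s hc4 lb4 atLeastAtMost_upt
  by code_simp
lemma th4_35: "theta_arc N4 {1..13} (23,32) = (set [(12,0)], set [], set [1, 2, 3, 4, 5, 6, 7, 8, 9, 10, 11, 13])"
  unfolding theta_arc_def Let_def snd_conv Bset_def Cset_eq2[OF n4(1,2) g4] Aset_eq2[OF n4(1,2) g4]
      hweight_eq[OF n4(1,2) g4] lv4 r4[THEN conjunct2] PS4s hc4 lb4 atLeastAtMost_upt
  by code_simp
lemma th4_36: "theta_arc N4 {1..13} (23,33) = (set [(13,0)], set [], set [1, 2, 3, 4, 5, 6, 7, 8, 9, 10, 11, 12])"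
  unfolding theta_arc_def Let_def snd_conv Bset_def Cset_eq2[OF n4(1,2) g4] Aset_eq2[OF n4(1,2) g4]
      hweight_eq[OF n4(1,2) g4] lv4 r4[THEN conjunct2] PS4s hc4 lb4 atLeastAtMost_upt
  by code_simp
lemmas th4s = th4_0 th4_1 th4_2 th4_3 th4_4 th4_5 th4_6 th4_7 th4_8 th4_9 th4_10 th4_11 th4_12 th4_13 th4_14 th4_15 th4_16 th4_17 th4_18 th4_19 th4_20 th4_21 th4_22 th4_23 th4_24 th4_25 th4_26 th4_27 th4_28 th4_29 th4_30 th4_31 th4_32 th4_33 th4_34 th4_35 th4_36

lemma th4: "theta_AB N4 {1..13} = set TL4"
proof -
  have "map (theta_arc N4 {1..13}) es4 = TL4"
    by (simp only: es4_def TL4_def list.map th4s)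
  then show ?thesis unfolding theta_AB_def n4(2) set_map[symmetric] by simp
qed

lemma c4: "class_I N4"
  apply (rule classI_check[OF n4(1,2) g4, where L="[12, 13, 14, 24, 25, 26, 27, 28, 29, 30, 31, 32, 33]" and xs="[0, 1, 2, 3, 4, 5, 6, 7, 8, 9, 10, 11, 12, 13, 14, 15, 16, 17, 18, 19, 20, 21, 22, 23, 24, 25, 26, 27, 28, 29, 30, 31, 32, 33]"])
    apply (simp add: lv4)
  unfolding list.map keyn_def hcs_def PS4s hc4
   apply code_simp
  apply code_simp
  done
lemma tl_eq: "set TL3 = set TL4"
proof
  show "set TL3 \<subseteq> set TL4"
    by (rule set_sub_idx[where js="[0, 0, 1, 7, 1, 3, 3, 6, 8, 8, 5, 10, 10, 12, 12, 14, 15, 16, 17, 18, 19, 20, 21, 22, 23, 24, 25, 26, 27, 28, 29, 30, 31, 32, 33, 34, 35, 36]"]) (simp add: TL3_def TL4_def)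
  show "set TL4 \<subseteq> set TL3"
    by (rule set_sub_idx[where js="[0, 2, 2, 5, 5, 10, 7, 3, 8, 8, 11, 11, 13, 13, 15, 16, 17, 18, 19, 20, 21, 22, 23, 24, 25, 26, 27, 28, 29, 30, 31, 32, 33, 34, 35, 36, 37]"]) (simp add: TL3_def TL4_def)
qed

theorem mainTheorem2:
  shows "\<exists>(N3 :: nat net) (N4 :: nat net).
     model_network N3 {1..13} \<and> model_network N4 {1..13}
     \<and> class_I N3 \<and> class_I N4
     \<and> \<not> net_iso N3 N4
     \<and> theta_AB N3 {1..13} = theta_AB N4 {1..13}"
proof (intro exI conjI)
  show "model_network N3 {1..13}" by (rule m3)
  show "model_network N4 {1..13}" by (rule m4)
  show "class_I N3" by (rule c3)
  show "class_I N4" by (rule c4)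
  show "theta_AB N3 {1..13} = theta_AB N4 {1..13}" unfolding th3 th4 by (rule tl_eq)
  show "\<not> net_iso N3 N4"
  proof
    assume "net_iso N3 N4"
    then obtain f where "bij_betw f (nodes N3) (nodes N4)" unfolding net_iso_def by blast
    then have "card (nodes N3) = card (nodes N4)" by (rule bij_betw_same_card)
    then show False by (simp add: n3 n4 ns3_def ns4_def)
  qed
qed
end
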